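(* Let $d\in\mathbb{N}$, $I_d\subseteq\{1,\ldots,d\}$, and let $n\in\mathbb{N}$ be prime. Then for every generating vector $\mathbf{z}=(z_1,\ldots,z_d)\in\mathbb{Z}_n^d:=\{0,1,\ldots,n-1\}^d$ the mean squared worst case error of the shifted rank-$1$ lattice rules $Q_{d,n}(\mathbf{z})+\boldsymbol{\Delta}$ with respect to all shifts $\boldsymbol{\Delta}\in[0,1)^d$ satisfies $$E(Q_{d,n}(\mathbf{z}))^2=\beta_0^d\sum_{\ell=1}^d B_{I_d,\ell}(z_1,\ldots,z_\ell),$$ where for $\ell=1,\ldots,d$ $$B_{I_d,\ell}(z_1,\ldots,z_\ell):=\sum_{\substack{\mathfrak{u}\subseteq\{1,\ldots,\ell\},\\ \ell\in\mathfrak{u}}} c_{\mathfrak{u},I_d}^{-1}\sum_{\mathbf{h}_{\mathfrak{u}}\in(\mathbb{Z}\setminus\{0\})^{\mathfrak{u}}}\frac{\mathbb{M}_{\mathfrak{u},I_d}(\mathbf{h}_{\mathfrak{u}})!}{\#\mathcal{S}_{\mathfrak{u},I_d}}\, r_{\alpha,\boldsymbol{\beta}}^{-1}(\mathbf{h}_{\mathfrak{u}})\,\mathbf{1}\{\mathbf{h}_{\mathfrak{u}}\in L(\mathbf{z}_{\mathfrak{u}},n)^{\perp}\}$$ and $c_{\mathfrak{u},I_d}:=\beta_0^{\#\mathfrak{u}}\binom{\#I_d}{\#(I_d\cap\mathfrak{u})}$.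
   Context: Standing setting. $R\colon[1,\infty)\to(0,\infty)$ is a function such that $\frac{1}{c_R}R(m)\le \frac{R(nm)}{n}\le R(m)$ for all $n,m\in\mathbb{N}$ with some constant $c_R\ge 1$, and $\mu_R(\alpha):=\sum_{m=1}^\infty R(m)^{-2\alpha}<\infty$ for the smoothness parameter $\alpha\ge 0$ (these imply $\alpha>1/2$). $\boldsymbol{\beta}=(\beta_0,\beta_1)$ are positive parameters. For a nonempty finite index set $\mathfrak{u}$ and $\mathbf{k}\in\mathbb{Z}^{\mathfrak{u}}$ put $r_{\alpha,\boldsymbol{\beta}}(\mathbf{k}):=\prod_{\ell\in\mathfrak{u}}\big(\delta_{0,k_\ell}\beta_0^{-1}+(1-\delta_{0,k_\ell})\beta_1^{-1}R(|k_\ell|)^{2\alpha}\big)$. The space $F_d(r_{\alpha,\boldsymbol{\beta}})$ consists of all $f\in L_2([0,1]^d)$ (complex valued) with $\|f\|^2:=\sum_{\mathbf{k}\in\mathbb{Z}^d}|\hat f(\mathbf{k})|^2 r_{\alpha,\boldsymbol{\beta}}(\mathbf{k})<\infty$, where $\hat f(\mathbf{k})=\int_{[0,1]^d}f(\mathbf{x})e^{-2\pi i\mathbf{k}\cdot\mathbf{x}}\,d\mathbf{x}$; it is a reproducing kernel Hilbert space. Permutation invariance. For $I_d\subseteq\{1,\ldots,d\}$ let $\mathcal{S}_d$ be the set of bijections $P$ of $\{1,\ldots,d\}$ with $P(j)=j$ for all $j\notin I_d$, and write $P(\mathbf{x}):=(x_{P(1)},\ldots,x_{P(d)})$. The subspace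 $\mathfrak{S}_{I_d}(F_d(r_{\alpha,\boldsymbol{\beta}}))$ consists of all $f\in F_d(r_{\alpha,\boldsymbol{\beta}})$ with $f(\mathbf{x})=f(P(\mathbf{x}))$ for all $\mathbf{x}\in[0,1]^d$, $P\in\mathcal{S}_d$, with the same norm. For nonempty $\mathfrak{u}\subseteq\{1,\ldots,d\}$ let $\mathcal{S}_{\mathfrak{u},I_d}$ be the set of bijections $P$ of $\mathfrak{u}$ with $P(j)=j$ for $j\in\mathfrak{u}\setminus I_d$, and for $\mathbf{h}_{\mathfrak{u}}\in\mathbb{Z}^{\mathfrak{u}}$ let $\mathbb{M}_{\mathfrak{u},I_d}(\mathbf{h}_{\mathfrak{u}})!:=\#\{P\in\mathcal{S}_{\mathfrak{u},I_d}: P(\mathbf{h}_{\mathfrak{u}})=\mathbf{h}_{\mathfrak{u}}\}$. For $\mathbf{h}\in\mathbb{Z}^d$, $\mathbf{h}_{\mathfrak{u}}=(h_j)_{j\in\mathfrak{u}}$ denotes the restriction. Lattice rules. For prime $n$ and $\mathbf{z}\in\mathbb{Z}_n^d$, the shifted rank-1 lattice rule $Q_{d,n}(\mathbf{z})+\boldsymbol{\Delta}$, $\boldsymbol{\Delta}\in[0,1)^d$, is $f\mapsto\frac1n\sum_{j=0}^{n-1}f(\{j\mathbf{z}/n+\boldsymbol{\Delta}\})$, with $\{\cdot\}$ the componentwise fractional part. For $\mathfrak{u}$ nonempty, $L(\mathbf{z}_{\mathfrak{u}},n)^\perp:=\{\mathbf{h}_{\mathfrak{u}}\in\mathbb{Z}^{\mathfrak{u}}:\mathbf{h}_{\mathfrak{u}}\cdot\mathbf{z}_{\mathfrak{u}}\equiv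 0\pmod n\}$. The worst case error of a cubature rule $Q$ on a normed space $H$ of functions is $e^{\mathrm{wor}}(Q;H):=\sup_{\|f\|_H\le1}|\int_{[0,1]^d}f-Q(f)|$, and $E(Q_{d,n}(\mathbf{z})):=\big(\int_{[0,1)^d}e^{\mathrm{wor}}(Q_{d,n}(\mathbf{z})+\boldsymbol{\Delta};\mathfrak{S}_{I_d}(F_d(r_{\alpha,\boldsymbol{\beta}})))^2\,d\boldsymbol{\Delta}\big)^{1/2}$. *)

theory Defs
  imports "HOL-Analysis.Analysis"
begin

text \<open>Points of [0,1]^d are extensional functions on the index set {1..d}.\<close>

definition cube :: "nat \<Rightarrow> (nat \<Rightarrow> real) measure" where
  "cube d = PiM {1..d} (\<lambda>_. restrict_space lborel {0..1})"

definition shift_cube :: "nat \<Rightarrow> (nat \<Rightarrow> real) measure" where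
  "shift_cube d = PiM {1..d} (\<lambda>_. restrict_space lborel {0..<1})"

definition Zd :: "nat \<Rightarrow> (nat \<Rightarrow> int) set" where
  "Zd d = {k. \<forall>j. j \<notin> {1..d} \<longrightarrow> k j = 0}"

definition dotp :: "nat \<Rightarrow> (nat \<Rightarrow> int) \<Rightarrow> (nat \<Rightarrow> real) \<Rightarrow> real" where
  "dotp d k x = (\<Sum>j\<in>{1..d}. real_of_int (k j) * x j)"

definition fourier_coeff :: "nat \<Rightarrow> ((nat \<Rightarrow> real) \<Rightarrow> complex) \<Rightarrow> (nat \<Rightarrow> int) \<Rightarrow> complex" where
  "fourier_coeff d f k =
     (LINT x|cube d. f x * exp (- (2 * of_real pi * \<i>) * of_real (dotp d k x)))"

definition r_ab :: "(real \<Rightarrow> real) \<Rightarrow> real \<Rightarrow> real \<Rightarrow> real \<Rightarrow> nat set \<Rightarrow> (nat \<Rightarrow> int) \<Rightarrow> real" where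
  "r_ab R \<alpha> \<beta>0 \<beta>1 u k =
     (\<Prod>l\<in>u. (if k l = 0 then 1 / \<beta>0 else R (real_of_int \<bar>k l\<bar>) powr (2 * \<alpha>) / \<beta>1))"

text \<open>The space F_d(r): square-integrable functions on [0,1]^d with finite weighted
  Fourier norm; as elements of the reproducing kernel Hilbert space they are identified
  with (pointwise equal to) their (absolutely convergent) Fourier series.\<close>
definition Fspace :: "(real \<Rightarrow> real) \<Rightarrow> real \<Rightarrow> real \<Rightarrow> real \<Rightarrow> nat \<Rightarrow> ((nat \<Rightarrow> real) \<Rightarrow> complex) set" where
  "Fspace R \<alpha> \<beta>0 \<beta>1 d = {f.
     f \<in> borel_measurable (cube d) \<and>
     integrable (cube d) (\<lambda>x. (cmod (f x))^2) \<and>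
     (\<lambda>k. (cmod (fourier_coeff d f k))^2 * r_ab R \<alpha> \<beta>0 \<beta>1 {1..d} k) summable_on Zd d \<and>
     (\<forall>x\<in>space (cube d).
        ((\<lambda>k. fourier_coeff d f k * exp (2 * of_real pi * \<i> * of_real (dotp d k x))) has_sum f x) (Zd d))}"

definition Fnorm :: "(real \<Rightarrow> real) \<Rightarrow> real \<Rightarrow> real \<Rightarrow> real \<Rightarrow> nat \<Rightarrow> ((nat \<Rightarrow> real) \<Rightarrow> complex) \<Rightarrow> real" where
  "Fnorm R \<alpha> \<beta>0 \<beta>1 d f =
     sqrt (\<Sum>\<^sub>\<infinity>k\<in>Zd d. (cmod (fourier_coeff d f k))^2 * r_ab R \<alpha> \<beta>0 \<beta>1 {1..d} k)"

definition Sym_space :: "(real \<Rightarrow> real) \<Rightarrow> real \<Rightarrow> real \<Rightarrow> real \<Rightarrow> nat \<Rightarrow> nat set \<Rightarrow> ((nat \<Rightarrow> real) \<Rightarrow> complex) set" where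
  "Sym_space R \<alpha> \<beta>0 \<beta>1 d I = {f \<in> Fspace R \<alpha> \<beta>0 \<beta>1 d.
     \<forall>x\<in>space (cube d). \<forall>P. P permutes I \<longrightarrow> f x = f (\<lambda>i. x (P i))}"

definition lattice_rule :: "nat \<Rightarrow> nat \<Rightarrow> (nat \<Rightarrow> int) \<Rightarrow> (nat \<Rightarrow> real) \<Rightarrow> ((nat \<Rightarrow> real) \<Rightarrow> complex) \<Rightarrow> complex" where
  "lattice_rule d n z \<Delta> f =
     of_real (1 / real n) *
     (\<Sum>j<n. f (restrict (\<lambda>i. frac (real j * real_of_int (z i) / real n + \<Delta> i)) {1..d}))"

definition wce :: "(real \<Rightarrow> real) \<Rightarrow> real \<Rightarrow> real \<Rightarrow> real \<Rightarrow> nat \<Rightarrow> nat set \<Rightarrow> nat \<Rightarrow> (nat \<Rightarrow> int) \<Rightarrow> (nat \<Rightarrow> real) \<Rightarrow> real" where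
  "wce R \<alpha> \<beta>0 \<beta>1 d I n z \<Delta> =
     Sup ((\<lambda>f. cmod ((LINT x|cube d. f x) - lattice_rule d n z \<Delta> f)) `
          {f \<in> Sym_space R \<alpha> \<beta>0 \<beta>1 d I. Fnorm R \<alpha> \<beta>0 \<beta>1 d f \<le> 1})"

definition rms_wce :: "(real \<Rightarrow> real) \<Rightarrow> real \<Rightarrow> real \<Rightarrow> real \<Rightarrow> nat \<Rightarrow> nat set \<Rightarrow> nat \<Rightarrow> (nat \<Rightarrow> int) \<Rightarrow> real" where
  "rms_wce R \<alpha> \<beta>0 \<beta>1 d I n z =
     sqrt (LINT \<Delta>|shift_cube d. (wce R \<alpha> \<beta>0 \<beta>1 d I n z \<Delta>)^2)"

definition Sperm :: "nat set \<Rightarrow> nat set \<Rightarrow> (nat \<Rightarrow> nat) set" where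
  "Sperm u I = {P. P permutes (u \<inter> I)}"

text \<open>M_{u,I_d}(h)!: number of P in S_{u,I_d} with P(h_u) = h_u.\<close>
definition Mfact :: "nat set \<Rightarrow> nat set \<Rightarrow> (nat \<Rightarrow> int) \<Rightarrow> nat" where
  "Mfact u I h = card {P \<in> Sperm u I. \<forall>j\<in>u. h (P j) = h j}"

definition c_uI :: "real \<Rightarrow> nat set \<Rightarrow> nat set \<Rightarrow> real" where
  "c_uI \<beta>0 u I = \<beta>0 ^ card u * real (card I choose card (I \<inter> u))"

definition nonzero_vecs :: "nat set \<Rightarrow> (nat \<Rightarrow> int) set" where
  "nonzero_vecs u = {h. (\<forall>j\<in>u. h j \<noteq> 0) \<and> (\<forall>j. j \<notin> u \<longrightarrow> h j = 0)}"

definition in_dual :: "nat \<Rightarrow> (nat \<Rightarrow> int) \<Rightarrow> nat set \<Rightarrow> (nat \<Rightarrow> int) \<Rightarrow> bool" where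
  "in_dual n z u h = (int n dvd (\<Sum>j\<in>u. h j * z j))"

definition B_term :: "(real \<Rightarrow> real) \<Rightarrow> real \<Rightarrow> real \<Rightarrow> real \<Rightarrow> nat set \<Rightarrow> nat \<Rightarrow> nat \<Rightarrow> (nat \<Rightarrow> int) \<Rightarrow> real" where
  "B_term R \<alpha> \<beta>0 \<beta>1 I n l z =
     (\<Sum>u\<in>{u. u \<subseteq> {1..l} \<and> l \<in> u}.
        inverse (c_uI \<beta>0 u I) *
        (\<Sum>\<^sub>\<infinity>h\<in>nonzero_vecs u.
           real (Mfact u I h) / real (card (Sperm u I)) *
           inverse (r_ab R \<alpha> \<beta>0 \<beta>1 u h) *
           (if in_dual n z u h then 1 else 0)))"

end

theory Submission
  imports Defs "HOL-Probability.Probability"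
begin

lemma lint_restrict_eq_interval:
  fixes f :: "real \<Rightarrow> complex"
  assumes "S = {0..1} \<or> S = {0..<1}"
  shows "(LINT t|restrict_space lborel S. f t) = (LBINT t=ereal 0..ereal 1. f t)"
proof -
  have "(LINT t|restrict_space lborel S. f t) = (LINT t:S|lborel. f t)"
    using assms by (auto simp: integral_restrict_space set_lebesgue_integral_def)
  also have "\<dots> = (LINT t:{0..1}|lborel. f t)"
    using assms
    by (auto intro!: set_integral_discrete_difference[where X="{1}"])
  also have "\<dots> = (LBINT t=ereal 0..ereal 1. f t)" by (rule interval_integral_Icc[symmetric]) simp
  finally show ?thesis .
qed

lemma cis_int_integral:
  fixes m :: int
  assumes "S = {0..1} \<or> S = {0..<1}"
  shows "(LINT t|restrict_space lborel S. cis (2*pi*(of_int m * t))) = (if m = 0 then 1 else 0)"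
proof -
  define c where "c = 2 * pi * \<i> * of_int m"
  have eq: "cis (2*pi*(of_int m * t)) = exp (c * of_real t)" for t
    by (simp add: cis_conv_exp c_def mult_ac)
  define G where "G w = (if m = 0 then w else exp (c * w) / c)" for w
  have "(LBINT t=ereal 0..ereal 1. exp (c * of_real t)) = G (of_real 1) - G (of_real 0)"
  proof (rule interval_integral_FTC_finite)
    show "continuous_on {min 0 1..max 0 1} (\<lambda>t. exp (c * of_real t))"
      by (intro continuous_intros)
    fix x :: real
    have "(G has_field_derivative exp (c * of_real x)) (at (of_real x))"
      unfolding G_def c_def
      by (cases "m = 0") (auto intro!: derivative_eq_intros simp: field_simps)
    then show "((\<lambda>t. G (of_real t)) has_vector_derivative exp (c * of_real x)) (at x within {min 0 1..max 0 1})"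
      by (rule has_vector_derivative_real_field)
  qed
  moreover have "G (of_real 1) - G (of_real 0) = (if m = 0 then 1 else 0)"
    by (simp add: G_def c_def exp_eq_1)
  ultimately show ?thesis using lint_restrict_eq_interval[OF assms] by (simp add: eq)
qed

definition ek :: "nat \<Rightarrow> (nat \<Rightarrow> int) \<Rightarrow> (nat \<Rightarrow> real) \<Rightarrow> complex" where
  "ek d k x = exp (2 * of_real pi * \<i> * of_real (dotp d k x))"

lemma ek_prod: "ek d k x = (\<Prod>j\<in>{1..d}. cis (2*pi*(of_int (k j) * x j)))"
  unfolding ek_def dotp_def
  by (simp add: cis_conv_exp sum_distrib_left exp_sum[symmetric] mult_ac)

lemma prob_space_restrict_unit:
  fixes S :: "real set"
  assumes "S = {0..1} \<or> S = {0..<1}"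
  shows "prob_space (restrict_space lborel S)"
proof -
  have "S \<in> sets borel" "emeasure lborel S = 1" using assms by auto
  then show ?thesis
    by (intro prob_spaceI) (simp add: space_restrict_space emeasure_restrict_space)
qed

lemma ek_integral:
  fixes S :: "real set"
  assumes "S = {0..1} \<or> S = {0..<1}"
  shows "(LINT x|PiM {1..d} (\<lambda>_. restrict_space lborel S). ek d k x) =
         (if \<forall>j\<in>{1..d}. k j = 0 then 1 else 0)"
proof -
  interpret P: product_sigma_finite "\<lambda>_. restrict_space lborel S"
    unfolding product_sigma_finite_def
    using prob_space_restrict_unit[OF assms] by (simp add: prob_space_imp_sigma_finite)
  have "(LINT x|PiM {1..d} (\<lambda>_. restrict_space lborel S). ek d k x) =
        (LINT x|PiM {1..d} (\<lambda>_. restrict_space lborel S). (\<Prod>j\<in>{1..d}. (\<lambda>j t. cis (2*pi*(of_int (k j) * t))) j (x j)))"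
    by (simp add: ek_prod)
  also have "\<dots> = (\<Prod>j\<in>{1..d}. LINT t|restrict_space lborel S. cis (2*pi*(of_int (k j) * t)))"
  proof (rule P.product_integral_prod)
    fix j
    interpret prob_space "restrict_space lborel S" by (rule prob_space_restrict_unit[OF assms])
    show "integrable (restrict_space lborel S) (\<lambda>t. cis (2*pi*(of_int (k j) * t)))"
      by (rule integrable_const_bound[where B=1]) (auto intro!: borel_measurable_continuous_onI continuous_intros measurable_restrict_space1)
  qed simp
  also have "\<dots> = (\<Prod>j\<in>{1..d}. if k j = 0 then 1 else 0)"
    by (simp add: cis_int_integral[OF assms])
  also have "\<dots> = (if \<forall>j\<in>{1..d}. k j = 0 then 1 else 0)"
    by (induction d) (auto simp: atLeastAtMostSuc_conv)
  finally show ?thesis .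
qed

lemma infsum_as_suminf:
  fixes f :: "nat \<Rightarrow> 'b::banach"
  assumes "summable (\<lambda>i. norm (f i))"
  shows "infsum f UNIV = suminf f" "f summable_on UNIV"
proof -
  have "summable f" using assms summable_norm_cancel by blast
  then have "(f has_sum suminf f) UNIV"
    using assms norm_summable_imp_has_sum summable_sums by blast
  then show "infsum f UNIV = suminf f" "f summable_on UNIV"
    by (auto simp: has_sum_iff)
qed

lemma infsum_integral:
  fixes F :: "'k \<Rightarrow> 'a \<Rightarrow> 'b::{banach,second_countable_topology}" and b :: "'k \<Rightarrow> real"
  assumes A: "countable A" and fm: "finite_measure M"
    and meas: "\<And>k. k \<in> A \<Longrightarrow> F k \<in> borel_measurable M"
    and bnd: "\<And>k x. k \<in> A \<Longrightarrow> x \<in> space M \<Longrightarrow> norm (F k x) \<le> b k"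
    and b0: "\<And>k. k \<in> A \<Longrightarrow> b k \<ge> 0"
    and bs: "b summable_on A"
  shows "integrable M (\<lambda>x. infsum (\<lambda>k. F k x) A)"
    "(LINT x|M. infsum (\<lambda>k. F k x) A) = infsum (\<lambda>k. LINT x|M. F k x) A"
proof -
  interpret finite_measure M by (rule fm)
  have intF: "integrable M (F k)" if "k \<in> A" for k
    using that by (intro integrable_const_bound[where B="b k"]) (auto intro: meas bnd)
  have "integrable M (\<lambda>x. infsum (\<lambda>k. F k x) A) \<and>
        (LINT x|M. infsum (\<lambda>k. F k x) A) = infsum (\<lambda>k. LINT x|M. F k x) A"
  proof (cases "finite A")
    case True
    then show ?thesis using intF by (auto simp: integral_sum)
  next
    case False
    define g where "g = from_nat_into A"
    have bij: "bij_betw g UNIV A" using bij_betw_from_nat_into[OF A False] g_def by simp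
    have gA: "g i \<in> A" for i using bij bij_betwE by blast
    have bsg: "summable (\<lambda>i. b (g i))"
    proof -
      have "(\<lambda>i. b (g i)) summable_on UNIV"
        using bs summable_on_reindex_bij_betw[OF bij] by blast
      then show ?thesis using summable_on_imp_summable by blast
    qed
    have pt: "infsum (\<lambda>k. F k x) A = (\<Sum>i. F (g i) x)" if x: "x \<in> space M" for x
    proof -
      have "summable (\<lambda>i. norm (F (g i) x))"
        by (rule summable_comparison_test'[OF bsg]) (use gA bnd x in auto)
      then have "infsum (\<lambda>i. F (g i) x) UNIV = (\<Sum>i. F (g i) x)"
        by (rule infsum_as_suminf)
      then show ?thesis using infsum_reindex_bij_betw[OF bij, of "\<lambda>k. F k x"] by simp
    qed
    have nint: "norm (LINT x|M. F k x) \<le> b k * measure M (space M)" if "k \<in> A" for k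
    proof -
      have "norm (LINT x|M. F k x) \<le> (LINT x|M. norm (F k x))" by (rule integral_norm_bound)
      also have "\<dots> \<le> (LINT x|M. b k)"
        using that by (intro integral_mono intF integrable_norm) (auto intro: bnd)
      also have "\<dots> = b k * measure M (space M)" by simp
      finally show ?thesis .
    qed
    have s1: "summable (\<lambda>i. (LINT x|M. norm (F (g i) x)))"
    proof (rule summable_comparison_test'[where g="\<lambda>i. b (g i) * measure M (space M)"])
      show "summable (\<lambda>i. b (g i) * measure M (space M))" using bsg by (rule summable_mult2)
      fix i :: nat
      have "(LINT x|M. norm (F (g i) x)) \<le> (LINT x|M. b (g i))"
        using gA by (intro integral_mono intF integrable_norm) (auto intro: bnd)
      then show "norm (LINT x|M. norm (F (g i) x)) \<le> b (g i) * measure M (space M)"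
        by (simp add: integral_nonneg_AE mult.commute)
    qed
    have ae: "AE x in M. summable (\<lambda>i. norm (F (g i) x))"
      by (intro AE_I2 summable_comparison_test'[OF bsg]) (use gA bnd in auto)
    have I1: "integrable M (\<lambda>x. \<Sum>i. F (g i) x)"
      by (rule integrable_suminf[OF intF[OF gA] ae s1])
    have I2: "(LINT x|M. (\<Sum>i. F (g i) x)) = (\<Sum>i. LINT x|M. F (g i) x)"
      by (rule integral_suminf[OF intF[OF gA] ae s1])
    have I3: "infsum (\<lambda>k. LINT x|M. F k x) A = (\<Sum>i. LINT x|M. F (g i) x)"
    proof -
      have "summable (\<lambda>i. norm (LINT x|M. F (g i) x))"
        by (rule summable_comparison_test'[OF summable_mult2[OF bsg, of "measure M (space M)"]])
           (use gA nint in auto)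
      then have "infsum (\<lambda>i. LINT x|M. F (g i) x) UNIV = (\<Sum>i. LINT x|M. F (g i) x)"
        by (rule infsum_as_suminf)
      then show ?thesis using infsum_reindex_bij_betw[OF bij, of "\<lambda>k. LINT x|M. F k x"] by simp
    qed
    have "integrable M (\<lambda>x. infsum (\<lambda>k. F k x) A)"
      using I1 by (subst Bochner_Integration.integrable_cong[OF refl pt]) auto
    moreover have "(LINT x|M. infsum (\<lambda>k. F k x) A) = (LINT x|M. (\<Sum>i. F (g i) x))"
      by (rule Bochner_Integration.integral_cong) (auto simp: pt)
    ultimately show ?thesis using I2 I3 by simp
  qed
  then show "integrable M (\<lambda>x. infsum (\<lambda>k. F k x) A)"
    "(LINT x|M. infsum (\<lambda>k. F k x) A) = infsum (\<lambda>k. LINT x|M. F k x) A" by auto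
qed

lemma r_ab_pos:
  assumes "\<And>x. x \<ge> 1 \<Longrightarrow> R x > 0" "\<beta>0 > 0" "\<beta>1 > 0"
  shows "r_ab R \<alpha> \<beta>0 \<beta>1 u k > 0"
  unfolding r_ab_def
proof (rule prod_pos)
  fix l
  show "0 < (if k l = 0 then 1 / \<beta>0 else R (real_of_int \<bar>k l\<bar>) powr (2 * \<alpha>) / \<beta>1)"
  proof (cases "k l = 0")
    case False
    then have "real_of_int \<bar>k l\<bar> \<ge> 1" by linarith
    then have "R (real_of_int \<bar>k l\<bar>) > 0" using assms(1) by blast
    then have "R (real_of_int \<bar>k l\<bar>) powr (2 * \<alpha>) / \<beta>1 > 0" using assms(3) by (intro divide_pos_pos) auto
    then show ?thesis using False by simp
  qed (use assms in simp)
qed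

locale setting =
  fixes R :: "real \<Rightarrow> real" and \<alpha> \<beta>0 \<beta>1 :: real and d :: nat
  assumes R_pos: "\<And>x. x \<ge> 1 \<Longrightarrow> R x > 0"
    and muR: "summable (\<lambda>m::nat. R (real (Suc m)) powr (- 2 * \<alpha>))"
    and beta0: "\<beta>0 > 0" and beta1: "\<beta>1 > 0" and d1: "d \<ge> 1"
begin

definition rr where "rr k = r_ab R \<alpha> \<beta>0 \<beta>1 {1..d} k"
definition phi :: "int \<Rightarrow> real" where
  "phi m = (if m = 0 then \<beta>0 else \<beta>1 * R (real_of_int \<bar>m\<bar>) powr (-2*\<alpha>))"
definition rho where "rho k = (\<Prod>j\<in>{1..d}. phi (k j))"

lemma rab_pos: "r_ab R \<alpha> \<beta>0 \<beta>1 u k > 0"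
  by (rule r_ab_pos) (use R_pos beta0 beta1 in auto)

lemma rr_pos: "rr k > 0" unfolding rr_def by (rule rab_pos)

lemma phi_pos: "phi m > 0"
proof (cases "m = 0")
  case False
  then have "real_of_int \<bar>m\<bar> \<ge> 1" by linarith
  then have "R (real_of_int \<bar>m\<bar>) > 0" using R_pos by blast
  then show ?thesis using False beta1 by (simp add: phi_def)
qed (use beta0 in \<open>simp add: phi_def\<close>)

lemma inv_term: "1 / (if k l = 0 then 1 / \<beta>0 else R (real_of_int \<bar>k l\<bar>) powr (2 * \<alpha>) / \<beta>1) = phi (k l)"
proof (cases "k l = 0")
  case False
  then have "real_of_int \<bar>k l\<bar> \<ge> 1" by linarith
  then have "R (real_of_int \<bar>k l\<bar>) > 0" using R_pos by blast
  then show ?thesis using False by (simp add: phi_def powr_minus divide_simps)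
qed (simp add: phi_def)

lemma rho_eq: "rho k = 1 / rr k"
proof -
  have "1 / rr k = (\<Prod>j\<in>{1..d}. 1 / (if k j = 0 then 1 / \<beta>0 else R (real_of_int \<bar>k j\<bar>) powr (2 * \<alpha>) / \<beta>1))"
    unfolding rr_def r_ab_def by (simp add: prod_dividef)
  also have "\<dots> = rho k" unfolding rho_def by (simp add: inv_term)
  finally show ?thesis by simp
qed

lemma rho_pos: "rho k > 0" unfolding rho_eq using rr_pos by simp

lemma phi_summable: "phi summable_on UNIV"
proof -
  have s0: "(\<lambda>i::nat. R (real (Suc i)) powr (- 2 * \<alpha>)) summable_on UNIV"
    using muR by (subst summable_on_UNIV_nonneg_real_iff) auto
  have "(\<lambda>i::nat. phi (int (Suc i))) summable_on UNIV"
  proof -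
    have "(\<lambda>i::nat. \<beta>1 * R (real (Suc i)) powr (- 2 * \<alpha>)) summable_on UNIV"
      using s0 by (rule summable_on_cmult_right)
    then show ?thesis by (simp add: phi_def add.commute)
  qed
  moreover have "bij_betw (\<lambda>i::nat. int (Suc i)) UNIV {m. m > 0}"
    by (rule bij_betwI[where g="\<lambda>m. nat m - 1"]) auto
  ultimately have p: "phi summable_on {m. m > 0}"
    using summable_on_reindex_bij_betw by blast
  have "(\<lambda>i::nat. phi (- int (Suc i))) summable_on UNIV"
  proof -
    have "(\<lambda>i::nat. \<beta>1 * R (real (Suc i)) powr (- 2 * \<alpha>)) summable_on UNIV"
      using s0 by (rule summable_on_cmult_right)
    then show ?thesis by (simp add: phi_def add.commute)
  qed
  moreover have "bij_betw (\<lambda>i::nat. - int (Suc i)) UNIV {m. m < 0}"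
    by (rule bij_betwI[where g="\<lambda>m. nat (-m) - 1"]) auto
  ultimately have q: "phi summable_on {m. m < 0}"
    using summable_on_reindex_bij_betw by blast
  have "phi summable_on ({m. m > 0} \<union> {m. m < 0})"
    by (rule summable_on_Un_disjoint[OF p q]) auto
  then have "phi summable_on ({m. m > 0} \<union> {m. m < 0} \<union> {0})"
    by (rule summable_on_Un_disjoint) auto
  moreover have "{m. m > 0} \<union> {m. m < 0} \<union> {0::int} = UNIV" by auto
  ultimately show ?thesis by simp
qed

definition ext0 :: "(nat \<Rightarrow> int) \<Rightarrow> nat \<Rightarrow> int" where
  "ext0 g = (\<lambda>j. if j \<in> {1..d} then g j else 0)"

lemma bij_ext0: "bij_betw ext0 (PiE {1..d} (\<lambda>_. UNIV)) (Zd d)"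
proof (rule bij_betwI[where g="\<lambda>k. restrict k {1..d}"])
  show "ext0 \<in> (PiE {1..d} (\<lambda>_. UNIV)) \<rightarrow> Zd d" by (auto simp: ext0_def Zd_def)
  show "(\<lambda>k. restrict k {1..d}) \<in> Zd d \<rightarrow> (PiE {1..d} (\<lambda>_. UNIV))" by auto
  show "restrict (ext0 x) {1..d} = x" if "x \<in> PiE {1..d} (\<lambda>_. UNIV)" for x
    using that by (auto simp: ext0_def fun_eq_iff PiE_def extensional_def)
  show "ext0 (restrict y {1..d}) = y" if "y \<in> Zd d" for y
    using that by (auto simp: ext0_def fun_eq_iff Zd_def)
qed

lemma rho_summable: "rho summable_on Zd d"
proof -
  define G where "G g = (\<Prod>j\<in>{1..d}. phi (g j))" for g
  have Gext: "rho (ext0 g) = G g" for g unfolding rho_def G_def ext0_def by simp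
  have "G summable_on PiE {1..d} (\<lambda>_. UNIV)"
  proof (rule ccontr)
    assume ns: "\<not> ?thesis"
    have "infsum G (PiE {1..d} (\<lambda>_. UNIV)) = (\<Prod>j\<in>{1..d}. infsum phi UNIV)"
      unfolding G_def
      by (rule infsum_prod_PiE_abs) (use phi_summable phi_pos in \<open>auto simp: less_imp_le\<close>)
    moreover have "infsum phi UNIV > 0"
    proof -
      have "infsum phi {0} \<le> infsum phi UNIV"
        by (rule infsum_mono_neutral) (use phi_summable phi_pos in \<open>auto simp: less_imp_le\<close>)
      then show ?thesis using phi_pos[of 0] by simp
    qed
    ultimately have "infsum G (PiE {1..d} (\<lambda>_. UNIV)) > 0" by simp
    then show False using infsum_not_exists[OF ns] by simp
  qed
  then have "(\<lambda>g. rho (ext0 g)) summable_on PiE {1..d} (\<lambda>_. UNIV)" by (simp add: Gext)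
  then show ?thesis using summable_on_reindex_bij_betw[OF bij_ext0] by blast
qed

lemma countable_Zd: "countable (Zd d)"
proof -
  have "countable (PiE {1..d} (\<lambda>_. UNIV :: int set))" by (rule countable_PiE) auto
  then have "countable (ext0 ` PiE {1..d} (\<lambda>_. UNIV))" by simp
  then show ?thesis using bij_ext0 bij_betw_imp_surj_on by metis
qed

end

definition UM :: "real set \<Rightarrow> nat \<Rightarrow> (nat \<Rightarrow> real) measure" where
  "UM S d = PiM {1..d} (\<lambda>_. restrict_space lborel S)"

lemma cube_UM: "cube d = UM {0..1} d" by (simp add: cube_def UM_def)
lemma shift_UM: "shift_cube d = UM {0..<1} d" by (simp add: shift_cube_def UM_def)

lemma UM_prob:
  assumes "S = {0..1} \<or> S = {0..<1}"
  shows "prob_space (UM S d)"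
  unfolding UM_def
  by (rule prob_space_PiM) (use prob_space_restrict_unit[OF assms] in auto)

lemma space_UM: "space (UM S d) = PiE {1..d} (\<lambda>_. S)"
  by (simp add: UM_def space_PiM space_restrict_space)

lemma ek_measurable[measurable]: "ek d k \<in> borel_measurable (UM S d)"
proof -
  have "(\<lambda>x. \<Prod>j\<in>{1..d}. cis (2*pi*(of_int (k j) * x j))) \<in> borel_measurable (UM S d)"
  proof (rule borel_measurable_prod)
    fix j assume j: "j \<in> {1..d}"
    have c: "(\<lambda>t::real. cis (2*pi*(of_int (k j) * t))) \<in> borel_measurable (restrict_space lborel S)"
      by (auto intro!: borel_measurable_continuous_onI continuous_intros measurable_restrict_space1)
    have "(\<lambda>x. x j) \<in> measurable (UM S d) (restrict_space lborel S)"
      unfolding UM_def using j by (rule measurable_component_singleton)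
    then show "(\<lambda>x. cis (2*pi*(of_int (k j) * x j))) \<in> borel_measurable (UM S d)"
      using c by (rule measurable_compose)
  qed
  then show ?thesis by (simp add: ek_prod[abs_def])
qed

lemma norm_ek[simp]: "norm (ek d k x) = 1"
  by (simp add: ek_def norm_exp_i_times[of "2 * pi * dotp d k x", simplified mult_ac] mult_ac)

lemma cnj_ek: "exp (- (2 * of_real pi * \<i>) * of_real (dotp d k x)) = cnj (ek d k x)"
  by (simp add: ek_def exp_cnj)

lemma cnj_ek_neg: "cnj (ek d k x) = ek d (\<lambda>j. - k j) x"
  by (simp add: ek_def exp_cnj dotp_def sum_negf)

lemma ek_cnj_measurable[measurable]: "(\<lambda>x. cnj (ek d k x)) \<in> borel_measurable (UM S d)"
  by (simp add: cnj_ek_neg)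

lemma dotp_diff: "dotp d (\<lambda>j. k j - k' j) x = dotp d k x - dotp d k' x"
  by (simp add: dotp_def algebra_simps sum_subtractf)

lemma ek_diff: "ek d k x * cnj (ek d k' x) = ek d (\<lambda>j. k j - k' j) x"
  by (simp add: ek_def exp_cnj dotp_diff algebra_simps exp_add[symmetric] exp_diff)

lemma Zd_diff_zero:
  assumes "k \<in> Zd d" "k' \<in> Zd d"
  shows "(\<forall>j\<in>{1..d}. k j - k' j = 0) \<longleftrightarrow> k = k'"
  using assms by (auto simp: Zd_def fun_eq_iff)

lemma ek_orth:
  assumes "S = {0..1} \<or> S = {0..<1}" "k \<in> Zd d" "k' \<in> Zd d"
  shows "(LINT x|UM S d. ek d k x * cnj (ek d k' x)) = (if k = k' then 1 else 0)"
  using ek_integral[OF assms(1), of d "\<lambda>j. k j - k' j"] Zd_diff_zero[OF assms(2,3)]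
  by (simp add: ek_diff UM_def)

context setting
begin

definition ser :: "((nat \<Rightarrow> int) \<Rightarrow> complex) \<Rightarrow> (nat \<Rightarrow> real) \<Rightarrow> complex" where
  "ser a x = infsum (\<lambda>k. a k * ek d k x) (Zd d)"

lemma ser_summable:
  assumes "(\<lambda>k. norm (a k)) summable_on Zd d"
  shows "(\<lambda>k. a k * ek d k x) summable_on Zd d"
  by (rule abs_summable_summable) (use assms in \<open>simp add: norm_mult\<close>)

lemma ser_bound:
  assumes "(\<lambda>k. norm (a k)) summable_on Zd d"
  shows "norm (ser a x) \<le> infsum (\<lambda>k. norm (a k)) (Zd d)"
proof -
  have "norm (ser a x) \<le> infsum (\<lambda>k. norm (a k * ek d k x)) (Zd d)"
    unfolding ser_def by (rule norm_infsum_bound) (use assms in \<open>simp add: norm_mult\<close>)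
  then show ?thesis by (simp add: norm_mult)
qed

lemma ser_integral:
  assumes as: "(\<lambda>k. norm (a k)) summable_on Zd d"
    and S: "S = {0..1} \<or> S = {0..<1}"
    and k: "k \<in> Zd d"
  shows "integrable (UM S d) (ser a)"
    "(LINT x|UM S d. ser a x * cnj (ek d k x)) = a k"
proof -
  interpret prob_space "UM S d" by (rule UM_prob[OF S])
  have "integrable (UM S d) (\<lambda>x. infsum (\<lambda>k. a k * ek d k x) (Zd d))"
    by (rule infsum_integral(1)[where b="\<lambda>k. norm (a k)"])
       (use as countable_Zd in \<open>auto simp: norm_mult finite_measure_axioms\<close>)
  then show "integrable (UM S d) (ser a)" by (simp add: ser_def[abs_def])
  have "(LINT x|UM S d. ser a x * cnj (ek d k x)) =
        (LINT x|UM S d. infsum (\<lambda>k'. a k' * ek d k' x * cnj (ek d k x)) (Zd d))"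
    unfolding ser_def
    by (rule Bochner_Integration.integral_cong[OF refl], rule infsum_cmult_left[symmetric])
       (use ser_summable[OF as] in auto)
  also have "\<dots> = infsum (\<lambda>k'. LINT x|UM S d. a k' * ek d k' x * cnj (ek d k x)) (Zd d)"
    by (rule infsum_integral(2)[where b="\<lambda>k. norm (a k)"])
       (use as countable_Zd in \<open>auto simp: norm_mult finite_measure_axioms intro!: borel_measurable_times\<close>)
  also have "\<dots> = infsum (\<lambda>k'. if k' = k then a k else 0) (Zd d)"
  proof (rule infsum_cong)
    fix k' assume k': "k' \<in> Zd d"
    have "(LINT x|UM S d. a k' * ek d k' x * cnj (ek d k x)) = a k' * (LINT x|UM S d. ek d k' x * cnj (ek d k x))"
      by (simp add: mult.assoc)
    also have "\<dots> = (if k' = k then a k else 0)"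
      using ek_orth[OF S k' k] by simp
    finally show "(LINT x|UM S d. a k' * ek d k' x * cnj (ek d k x)) = (if k' = k then a k else 0)" .
  qed
  also have "\<dots> = infsum (\<lambda>k'. a k) {k}"
    by (rule infsum_cong_neutral) (use k in auto)
  also have "\<dots> = a k" by simp
  finally show "(LINT x|UM S d. ser a x * cnj (ek d k x)) = a k" .
qed

lemma ser_coeff:
  assumes as: "(\<lambda>k. norm (a k)) summable_on Zd d" and k: "k \<in> Zd d"
  shows "fourier_coeff d (ser a) k = a k"
  unfolding fourier_coeff_def cnj_ek cube_UM
  by (rule ser_integral(2)[OF as _ k]) simp

lemma ser_in_Fspace:
  assumes as: "(\<lambda>k. norm (a k)) summable_on Zd d"
    and sq: "(\<lambda>k. (cmod (a k))^2 * rr k) summable_on Zd d"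
  shows "ser a \<in> Fspace R \<alpha> \<beta>0 \<beta>1 d"
    "Fnorm R \<alpha> \<beta>0 \<beta>1 d (ser a) = sqrt (infsum (\<lambda>k. (cmod (a k))^2 * rr k) (Zd d))"
proof -
  have co: "fourier_coeff d (ser a) k = a k" if "k \<in> Zd d" for k
    using ser_coeff[OF as that] .
  have int: "integrable (cube d) (ser a)"
  proof -
    have "(\<lambda>_. 0) \<in> Zd d" by (simp add: Zd_def)
    then show ?thesis unfolding cube_UM by (rule ser_integral(1)[OF as, rotated]) simp
  qed
  then have meas: "ser a \<in> borel_measurable (cube d)" by auto
  define B where "B = infsum (\<lambda>k. norm (a k)) (Zd d)"
  have sqint: "integrable (cube d) (\<lambda>x. (cmod (ser a x))^2)"
  proof -
    interpret prob_space "cube d" unfolding cube_UM by (rule UM_prob) simp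
    show ?thesis
    proof (rule integrable_const_bound[where B="B^2"])
      show "AE x in cube d. norm ((cmod (ser a x))\<^sup>2) \<le> B\<^sup>2"
        using ser_bound[OF as] by (auto simp: B_def intro!: power_mono)
    qed (use meas in auto)
  qed
  have sum2: "(\<lambda>k. (cmod (fourier_coeff d (ser a) k))^2 * r_ab R \<alpha> \<beta>0 \<beta>1 {1..d} k) summable_on Zd d"
    using sq by (subst summable_on_cong[where g="\<lambda>k. (cmod (a k))^2 * rr k"]) (auto simp: co rr_def)
  have hs: "((\<lambda>k. fourier_coeff d (ser a) k * exp (2 * of_real pi * \<i> * of_real (dotp d k x))) has_sum ser a x) (Zd d)" for x
  proof -
    have "((\<lambda>k. a k * ek d k x) has_sum ser a x) (Zd d)"
      unfolding ser_def using ser_summable[OF as] by (rule has_sum_infsum)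
    then show ?thesis by (rule has_sum_cong[THEN iffD1, rotated]) (auto simp: co ek_def)
  qed
  show "ser a \<in> Fspace R \<alpha> \<beta>0 \<beta>1 d"
    unfolding Fspace_def using meas sqint sum2 hs by auto
  show "Fnorm R \<alpha> \<beta>0 \<beta>1 d (ser a) = sqrt (infsum (\<lambda>k. (cmod (a k))^2 * rr k) (Zd d))"
    unfolding Fnorm_def by (rule arg_cong[where f=sqrt], rule infsum_cong) (auto simp: co rr_def)
qed

end

lemma summable_on_cdivide:
  fixes f :: "'a \<Rightarrow> 'b :: {topological_semigroup_mult, field, semiring_0}"
  shows "f summable_on A \<Longrightarrow> (\<lambda>x. f x / c) summable_on A"
  using has_sum_divide_const unfolding summable_on_def by blast

lemma infsum_cdivide:
  fixes f :: "'a \<Rightarrow> 'b :: {topological_semigroup_mult, field, semiring_0, t2_space}"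
  shows "f summable_on A \<Longrightarrow> infsum (\<lambda>x. f x / c) A = infsum f A / c"
  by (metis has_sum_divide_const has_sum_infsum infsumI)

lemma infsum_finsum:
  fixes f :: "'j \<Rightarrow> 'k \<Rightarrow> 'b::{topological_comm_monoid_add,t2_space}"
  assumes "finite J" "\<And>j. j \<in> J \<Longrightarrow> f j summable_on A"
  shows "infsum (\<lambda>k. \<Sum>j\<in>J. f j k) A = (\<Sum>j\<in>J. infsum (f j) A) \<and>
    (\<lambda>k. \<Sum>j\<in>J. f j k) summable_on A"
  using assms
proof (induction J rule: finite_induct)
  case empty
  show ?case by simp
next
  case (insert x F)
  have IH: "infsum (\<lambda>k. \<Sum>j\<in>F. f j k) A = (\<Sum>j\<in>F. infsum (f j) A)"
     "(\<lambda>k. \<Sum>j\<in>F. f j k) summable_on A" using insert by auto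
  have fx: "f x summable_on A" using insert by auto
  have "infsum (\<lambda>k. \<Sum>j\<in>insert x F. f j k) A = infsum (\<lambda>k. f x k + (\<Sum>j\<in>F. f j k)) A"
    using insert by simp
  also have "\<dots> = infsum (f x) A + infsum (\<lambda>k. \<Sum>j\<in>F. f j k) A"
    by (rule infsum_add[OF fx IH(2)])
  finally have 1: "infsum (\<lambda>k. \<Sum>j\<in>insert x F. f j k) A = (\<Sum>j\<in>insert x F. infsum (f j) A)"
    using insert IH by simp
  have "(\<lambda>k. f x k + (\<Sum>j\<in>F. f j k)) summable_on A" by (rule summable_on_add[OF fx IH(2)])
  then show ?case using insert 1 by simp
qed

lemma root_sum:
  fixes m :: int and n :: nat
  assumes n: "n > 0"
  shows "(\<Sum>j<n. exp (2 * of_real pi * \<i> * of_real (real j * real_of_int m / real n))) =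
         (if int n dvd m then of_nat n else 0)"
proof -
  define q where "q = exp (2 * of_real pi * \<i> * of_real (real_of_int m / real n))"
  have qj: "exp (2 * of_real pi * \<i> * of_real (real j * real_of_int m / real n)) = q ^ j" for j
  proof -
    have "2 * of_real pi * \<i> * of_real (real j * real_of_int m / real n) =
          of_nat j * (2 * of_real pi * \<i> * of_real (real_of_int m / real n))"
      by simp
    then show ?thesis unfolding q_def by (simp only: exp_of_nat_mult)
  qed
  show ?thesis
  proof (cases "int n dvd m")
    case True
    then obtain l where l: "m = int n * l" by blast
    have "q = 1" unfolding q_def exp_eq_1 using n l
      by (auto intro!: exI[of _ l] simp: field_simps)
    have "(\<Sum>j<n. exp (2 * of_real pi * \<i> * of_real (real j * real_of_int m / real n))) = (\<Sum>j<n. q ^ j)"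
      by (simp only: qj)
    then show ?thesis using True \<open>q = 1\<close> by simp
  next
    case False
    have q1: "q \<noteq> 1"
    proof
      assume "q = 1"
      then obtain l :: int where "2 * pi * (real_of_int m / real n) = of_int (2 * l) * pi"
        unfolding q_def exp_eq_1 by auto
      then have "real_of_int m = real_of_int l * real n" using n by (simp add: field_simps)
      then have "m = l * int n" by (metis of_int_eq_iff of_int_mult of_int_of_nat_eq)
      then show False using False by simp
    qed
    have qn: "q ^ n = 1"
    proof -
      have "q ^ n = exp (of_nat n * (2 * of_real pi * \<i> * of_real (real_of_int m / real n)))"
        unfolding q_def by (simp only: exp_of_nat_mult)
      also have "\<dots> = 1" unfolding exp_eq_1 using n by (auto intro!: exI[of _ m])
      finally show ?thesis .
    qed
    have "(\<Sum>j<n. exp (2 * of_real pi * \<i> * of_real (real j * real_of_int m / real n))) = (\<Sum>j<n. q ^ j)"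
      by (simp only: qj)
    then show ?thesis using False q1 qn by (simp add: geometric_sum)
  qed
qed

context setting
begin

definition mz :: "(nat \<Rightarrow> int) \<Rightarrow> (nat \<Rightarrow> int) \<Rightarrow> int" where
  "mz z k = (\<Sum>j\<in>{1..d}. k j * z j)"

lemma Fspace_hassum:
  assumes "f \<in> Fspace R \<alpha> \<beta>0 \<beta>1 d" "x \<in> space (cube d)"
  shows "((\<lambda>k. fourier_coeff d f k * ek d k x) has_sum f x) (Zd d)"
  using assms unfolding Fspace_def ek_def by auto

lemma Fspace_sq_summable:
  assumes "f \<in> Fspace R \<alpha> \<beta>0 \<beta>1 d"
  shows "(\<lambda>k. (cmod (fourier_coeff d f k))^2 * rr k) summable_on Zd d"
  using assms unfolding Fspace_def rr_def by auto

lemma amgm_aux: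
  fixes x r l :: real
  assumes "r > 0" "l > 0" "x \<ge> 0" "y \<ge> 0"
  shows "x * y \<le> (l * x^2 * r + y^2 / (l * r)) / 2"
proof -
  have "0 \<le> (l * r * x - y)^2" by simp
  then have "2 * (l * r) * (x * y) \<le> (l * r) * (l * x^2 * r) + y^2"
    by (simp add: power2_eq_square algebra_simps)
  then show ?thesis using assms by (simp add: field_simps)
qed

lemma coeff_abs_summable:
  assumes "f \<in> Fspace R \<alpha> \<beta>0 \<beta>1 d"
  shows "(\<lambda>k. norm (fourier_coeff d f k)) summable_on Zd d"
proof -
  have s: "(\<lambda>k. ((cmod (fourier_coeff d f k))^2 * rr k + rho k) / 2) summable_on Zd d"
    using summable_on_add[OF Fspace_sq_summable[OF assms] rho_summable]
    by (rule summable_on_cdivide)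
  show ?thesis
  proof (rule summable_on_comparison_test[OF s])
    fix k
    have "cmod (fourier_coeff d f k) * 1 \<le> (1 * (cmod (fourier_coeff d f k))^2 * rr k + 1^2 / (1 * rr k)) / 2"
      by (rule amgm_aux) (auto simp: rr_pos)
    then show "norm (fourier_coeff d f k) \<le> ((cmod (fourier_coeff d f k))^2 * rr k + rho k) / 2"
      by (simp add: rho_eq)
  qed auto
qed

lemma cs_bound:
  fixes c w :: "(nat \<Rightarrow> int) \<Rightarrow> complex"
  assumes cs: "(\<lambda>k. (cmod (c k))^2 * rr k) summable_on Zd d"
    and c1: "infsum (\<lambda>k. (cmod (c k))^2 * rr k) (Zd d) \<le> 1"
    and ws: "(\<lambda>k. (cmod (w k))^2 * rho k) summable_on Zd d"
  shows "(\<lambda>k. c k * w k) summable_on Zd d"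
    "norm (infsum (\<lambda>k. c k * w k) (Zd d)) \<le> sqrt (infsum (\<lambda>k. (cmod (w k))^2 * rho k) (Zd d))"
proof -
  define W where "W = infsum (\<lambda>k. (cmod (w k))^2 * rho k) (Zd d)"
  define N where "N = infsum (\<lambda>k. (cmod (c k))^2 * rr k) (Zd d)"
  have W0: "W \<ge> 0" unfolding W_def by (intro infsum_nonneg) (simp add: less_imp_le[OF rho_pos])
  have N0: "N \<ge> 0" unfolding N_def by (intro infsum_nonneg) (simp add: less_imp_le[OF rr_pos])
  have main: "(\<lambda>k. c k * w k) summable_on Zd d \<and>
        norm (infsum (\<lambda>k. c k * w k) (Zd d)) \<le> sqrt W"
  proof (cases "W = 0")
    case True
    have "w k = 0" if k: "k \<in> Zd d" for k
    proof -
      have "(cmod (w k))^2 * rho k = 0"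
        by (rule nonneg_infsum_le_0D[OF _ ws _ k]) (use True W_def in \<open>auto simp: less_imp_le[OF rho_pos]\<close>)
      then show ?thesis using rho_pos[of k] by simp
    qed
    then have "(\<lambda>k. c k * w k) summable_on Zd d \<and> infsum (\<lambda>k. c k * w k) (Zd d) = 0"
      by (simp add: summable_on_cong[where g="\<lambda>_. 0"] infsum_cong[where g="\<lambda>_. 0"])
    then show ?thesis using True by simp
  next
    case False
    define l where "l = sqrt W"
    have l0: "l > 0" using False W0 by (simp add: l_def)
    have bnd: "norm (c k * w k) \<le> (l * (cmod (c k))^2 * rr k + (cmod (w k))^2 * rho k / l) / 2" for k
    proof -
      have "cmod (c k) * cmod (w k) \<le> (l * (cmod (c k))^2 * rr k + (cmod (w k))^2 / (l * rr k)) / 2"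
        by (rule amgm_aux) (use l0 rr_pos in auto)
      then show ?thesis by (simp add: norm_mult rho_eq mult.commute)
    qed
    have sb: "(\<lambda>k. (l * (cmod (c k))^2 * rr k + (cmod (w k))^2 * rho k / l) / 2) summable_on Zd d"
    proof -
      have "(\<lambda>k. l * ((cmod (c k))^2 * rr k)) summable_on Zd d" by (rule summable_on_cmult_right[OF cs])
      moreover have "(\<lambda>k. (cmod (w k))^2 * rho k / l) summable_on Zd d" by (rule summable_on_cdivide[OF ws])
      ultimately show ?thesis by (intro summable_on_cdivide) (auto dest: summable_on_add simp: mult.assoc)
    qed
    have as: "(\<lambda>k. norm (c k * w k)) summable_on Zd d"
      by (rule summable_on_comparison_test[OF sb]) (use bnd in auto)
    then have sm: "(\<lambda>k. c k * w k) summable_on Zd d" by (rule abs_summable_summable)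
    have "norm (infsum (\<lambda>k. c k * w k) (Zd d)) \<le> infsum (\<lambda>k. norm (c k * w k)) (Zd d)"
      by (rule norm_infsum_bound[OF as])
    also have "\<dots> \<le> infsum (\<lambda>k. (l * (cmod (c k))^2 * rr k + (cmod (w k))^2 * rho k / l) / 2) (Zd d)"
      by (rule infsum_mono[OF as sb]) (use bnd in auto)
    also have "\<dots> = (l * N + W / l) / 2"
    proof -
      have "infsum (\<lambda>k. (l * (cmod (c k))^2 * rr k + (cmod (w k))^2 * rho k / l) / 2) (Zd d) =
            infsum (\<lambda>k. l * ((cmod (c k))^2 * rr k) + (cmod (w k))^2 * rho k / l) (Zd d) / 2"
      proof -
        have s2: "(\<lambda>k. l * ((cmod (c k))^2 * rr k) + (cmod (w k))^2 * rho k / l) summable_on Zd d"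
          by (intro summable_on_add summable_on_cmult_right cs summable_on_cdivide ws)
        show ?thesis using infsum_cdivide[OF s2, of 2] by (simp add: mult.assoc)
      qed
      also have "\<dots> = (infsum (\<lambda>k. l * ((cmod (c k))^2 * rr k)) (Zd d) + infsum (\<lambda>k. (cmod (w k))^2 * rho k / l) (Zd d)) / 2"
        by (subst infsum_add) (auto intro: summable_on_cmult_right[OF cs] summable_on_cdivide[OF ws])
      also have "\<dots> = (l * N + W / l) / 2"
        by (simp add: infsum_cmult_right[OF cs] infsum_cdivide[OF ws] N_def W_def)
      finally show ?thesis .
    qed
    also have "\<dots> \<le> (l * 1 + W / l) / 2"
      using c1 l0 by (simp add: N_def)
    also have "\<dots> = l" using l0 W0 by (simp add: l_def field_simps)
    finally show ?thesis using sm by (simp add: l_def)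
  qed
  then show "(\<lambda>k. c k * w k) summable_on Zd d"
    "norm (infsum (\<lambda>k. c k * w k) (Zd d)) \<le> sqrt (infsum (\<lambda>k. (cmod (w k))^2 * rho k) (Zd d))"
    by (auto simp: W_def)
qed

end

locale setting2 = setting +
  fixes n :: nat and z :: "nat \<Rightarrow> int" and I :: "nat set"
  assumes n_pos: "n > 0" and I_sub: "I \<subseteq> {1..d}"
begin

definition Adual :: "(nat \<Rightarrow> int) set" where
  "Adual = {k \<in> Zd d. k \<noteq> (\<lambda>_. 0) \<and> in_dual n z {1..d} k}"

definition err where
  "err f \<Delta> = (LINT x|cube d. f x) - lattice_rule d n z \<Delta> f"

definition pt :: "(nat \<Rightarrow> real) \<Rightarrow> nat \<Rightarrow> nat \<Rightarrow> real" where
  "pt \<Delta> j = restrict (\<lambda>i. frac (real j * real_of_int (z i) / real n + \<Delta> i)) {1..d}"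

lemma pt_space: "pt \<Delta> j \<in> space (cube d)"
  by (auto simp: pt_def cube_UM space_UM frac_lt_1 less_imp_le)

lemma ek_zero: "ek d (\<lambda>_. 0) x = 1"
  by (simp add: ek_def dotp_def)

lemma zero_Zd: "(\<lambda>_. 0) \<in> Zd d" by (simp add: Zd_def)

lemma integral_coeff0: "(LINT x|cube d. f x) = fourier_coeff d f (\<lambda>_. 0)"
  by (simp add: fourier_coeff_def dotp_def)

lemma exp_int: "exp (2 * of_real pi * \<i> * of_int N) = 1"
  unfolding exp_eq_1 by (auto intro!: exI[of _ N])

lemma ek_pt: "ek d k (pt \<Delta> j) =
  exp (2 * of_real pi * \<i> * of_real (real j * real_of_int (mz z k) / real n)) * ek d k \<Delta>"
proof -
  define N where "N = (\<Sum>i\<in>{1..d}. k i * \<lfloor>real j * real_of_int (z i) / real n + \<Delta> i\<rfloor>)"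
  have "dotp d k (pt \<Delta> j) = (\<Sum>i\<in>{1..d}. real_of_int (k i) * (real j * real_of_int (z i) / real n + \<Delta> i)) - real_of_int N"
    unfolding dotp_def pt_def N_def
    by (simp add: frac_def algebra_simps sum_subtractf)
  also have "\<dots> = real j * real_of_int (mz z k) / real n + dotp d k \<Delta> - real_of_int N"
    by (simp add: mz_def dotp_def algebra_simps sum.distrib sum_divide_distrib sum_distrib_left)
  finally have e: "dotp d k (pt \<Delta> j) = real j * real_of_int (mz z k) / real n + dotp d k \<Delta> - real_of_int N" .
  define A where "A = real j * real_of_int (mz z k) / real n"
  define B where "B = dotp d k \<Delta>"
  have eq: "2 * of_real pi * \<i> * complex_of_real (A + B - real_of_int N) =
     (2 * of_real pi * \<i> * of_real A + 2 * of_real pi * \<i> * of_real B) - 2 * of_real pi * \<i> * of_int N"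
    by (simp add: algebra_simps)
  have "ek d k (pt \<Delta> j) = exp (2 * of_real pi * \<i> * complex_of_real (A + B - real_of_int N))"
    unfolding ek_def e A_def B_def by simp
  also have "\<dots> = exp (2 * of_real pi * \<i> * of_real A) * exp (2 * of_real pi * \<i> * of_real B) / exp (2 * of_real pi * \<i> * of_int N)"
    unfolding eq by (simp only: exp_diff exp_add)
  finally show ?thesis by (simp add: exp_int A_def B_def ek_def)
qed

lemma lattice_formula:
  assumes f: "f \<in> Fspace R \<alpha> \<beta>0 \<beta>1 d"
  shows "lattice_rule d n z \<Delta> f =
    infsum (\<lambda>k. fourier_coeff d f k * ek d k \<Delta> * (if int n dvd mz z k then 1 else 0)) (Zd d)"
proof -
  define c where "c = fourier_coeff d f"
  define E where "E j k = exp (2 * of_real pi * \<i> * of_real (real j * real_of_int (mz z k) / real n))" for j k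
  have cs: "(\<lambda>k. norm (c k)) summable_on Zd d" unfolding c_def by (rule coeff_abs_summable[OF f])
  have sj: "(\<lambda>k. c k * ek d k \<Delta> * E j k) summable_on Zd d" for j
    by (rule abs_summable_summable) (use cs in \<open>simp add: norm_mult E_def\<close>)
  have fp: "f (pt \<Delta> j) = infsum (\<lambda>k. c k * ek d k \<Delta> * E j k) (Zd d)" for j
  proof -
    have "f (pt \<Delta> j) = infsum (\<lambda>k. c k * ek d k (pt \<Delta> j)) (Zd d)"
      using Fspace_hassum[OF f pt_space] unfolding c_def by (simp add: has_sum_iff)
    then show ?thesis by (simp add: ek_pt E_def mult_ac)
  qed
  have "lattice_rule d n z \<Delta> f = of_real (1 / real n) * (\<Sum>j<n. f (pt \<Delta> j))"
    by (simp add: lattice_rule_def pt_def)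
  also have "\<dots> = of_real (1 / real n) * infsum (\<lambda>k. \<Sum>j<n. c k * ek d k \<Delta> * E j k) (Zd d)"
    using infsum_finsum[of "{..<n}" "\<lambda>j k. c k * ek d k \<Delta> * E j k" "Zd d"] sj
    by (simp add: fp)
  also have "\<dots> = infsum (\<lambda>k. of_real (1 / real n) * (\<Sum>j<n. c k * ek d k \<Delta> * E j k)) (Zd d)"
    by (rule infsum_cmult_right[symmetric])
       (use infsum_finsum[of "{..<n}" "\<lambda>j k. c k * ek d k \<Delta> * E j k" "Zd d"] sj in auto)
  also have "\<dots> = infsum (\<lambda>k. c k * ek d k \<Delta> * (if int n dvd mz z k then 1 else 0)) (Zd d)"
  proof (rule infsum_cong)
    fix k
    have "(\<Sum>j<n. c k * ek d k \<Delta> * E j k) = c k * ek d k \<Delta> * (\<Sum>j<n. E j k)"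
      by (simp add: sum_distrib_left)
    also have "\<dots> = c k * ek d k \<Delta> * (if int n dvd mz z k then of_nat n else 0)"
      unfolding E_def using root_sum[OF n_pos] by simp
    finally show "of_real (1 / real n) * (\<Sum>j<n. c k * ek d k \<Delta> * E j k) =
        c k * ek d k \<Delta> * (if int n dvd mz z k then 1 else 0)"
      using n_pos by simp
  qed
  finally show ?thesis by (simp add: c_def)
qed

lemma err_formula:
  assumes f: "f \<in> Fspace R \<alpha> \<beta>0 \<beta>1 d"
  shows "err f \<Delta> = - infsum (\<lambda>k. fourier_coeff d f k * ek d k \<Delta>) Adual"
    "(\<lambda>k. fourier_coeff d f k * ek d k \<Delta>) summable_on Adual"
proof -
  define g where "g k = fourier_coeff d f k * ek d k \<Delta> * (if int n dvd mz z k then 1 else 0)" for k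
  have cs: "(\<lambda>k. norm (fourier_coeff d f k)) summable_on Zd d" by (rule coeff_abs_summable[OF f])
  have gs: "g summable_on Zd d"
    by (rule abs_summable_summable, rule summable_on_comparison_test[OF cs]) (auto simp: g_def norm_mult)
  have Zi: "Zd d = insert (\<lambda>_. 0) (Zd d - {\<lambda>_. 0})" using zero_Zd by auto
  have "infsum g (Zd d) = g (\<lambda>_. 0) + infsum g (Zd d - {\<lambda>_. 0})"
    by (subst Zi, rule infsum_insert) (use summable_on_subset_banach[OF gs] in auto)
  moreover have "g (\<lambda>_. 0) = fourier_coeff d f (\<lambda>_. 0)" by (simp add: g_def ek_zero mz_def)
  moreover have "infsum g (Zd d - {\<lambda>_. 0}) = infsum (\<lambda>k. fourier_coeff d f k * ek d k \<Delta>) Adual"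
    by (rule infsum_cong_neutral) (auto simp: g_def Adual_def in_dual_def mz_def)
  ultimately show "err f \<Delta> = - infsum (\<lambda>k. fourier_coeff d f k * ek d k \<Delta>) Adual"
    unfolding err_def integral_coeff0 lattice_formula[OF f] g_def[symmetric] by simp
  show "(\<lambda>k. fourier_coeff d f k * ek d k \<Delta>) summable_on Adual"
  proof (rule abs_summable_summable)
    have "(\<lambda>k. norm (fourier_coeff d f k)) summable_on Adual"
      by (rule summable_on_subset_banach[OF cs]) (auto simp: Adual_def)
    then show "(\<lambda>k. norm (fourier_coeff d f k * ek d k \<Delta>)) summable_on Adual"
      by (simp add: norm_mult)
  qed
qed

end

context setting2
begin

definition Sg :: "(nat \<Rightarrow> nat) set" where "Sg = {P. P permutes I}"

lemma finite_I: "finite I" using I_sub finite_subset by blast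

lemma Sg_finite: "finite Sg" unfolding Sg_def by (rule finite_permutations[OF finite_I])

lemma Sg_card_pos: "card Sg > 0"
  using Sg_finite by (auto simp: card_gt_0_iff Sg_def intro!: exI[of _ id])

lemma Sg_D: "P \<in> Sg \<Longrightarrow> P permutes {1..d}"
  unfolding Sg_def using I_sub permutes_subset by blast

lemma comp_Zd: "k \<in> Zd d \<Longrightarrow> P permutes {1..d} \<Longrightarrow> k \<circ> P \<in> Zd d"
  by (auto simp: Zd_def permutes_not_in)

lemma dotp_perm:
  assumes "P permutes {1..d}"
  shows "dotp d (k \<circ> P) (\<lambda>i. x (P i)) = dotp d k x"
  unfolding dotp_def
  using sum.reindex_bij_betw[OF permutes_imp_bij[OF assms], of "\<lambda>j. real_of_int (k j) * x j"]
  by (simp add: o_def)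

lemma ek_perm:
  assumes "P permutes {1..d}"
  shows "ek d (k \<circ> P) (\<lambda>i. x (P i)) = ek d k x"
  unfolding ek_def dotp_perm[OF assms] ..

lemma rr_perm:
  assumes "P permutes {1..d}"
  shows "rr (k \<circ> P) = rr k"
  unfolding rr_def r_ab_def comp_def
  using prod.reindex_bij_betw[OF permutes_imp_bij[OF assms],
     of "\<lambda>l. if k l = 0 then 1 / \<beta>0 else R (real_of_int \<bar>k l\<bar>) powr (2 * \<alpha>) / \<beta>1"]
  by (simp add: o_def)

lemma rho_perm:
  assumes "P permutes {1..d}"
  shows "rho (k \<circ> P) = rho k"
  using rr_perm[OF assms] by (simp add: rho_eq)

lemma comp_inv_cancel:
  assumes "P permutes S"
  shows "k \<circ> P \<circ> inv P = k" "k \<circ> inv P \<circ> P = k"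
  using permutes_inv_o[OF assms] by (simp_all add: o_assoc[symmetric])

lemma bij_comp:
  assumes "P permutes {1..d}"
  shows "bij_betw (\<lambda>k. k \<circ> P) (Zd d) (Zd d)"
proof (rule bij_betwI[where g="\<lambda>k. k \<circ> inv P"])
  have iP: "inv P permutes {1..d}" by (rule permutes_inv[OF assms])
  show "(\<lambda>k. k \<circ> P) \<in> Zd d \<rightarrow> Zd d" using comp_Zd[OF _ assms] by auto
  show "(\<lambda>k. k \<circ> inv P) \<in> Zd d \<rightarrow> Zd d" using comp_Zd[OF _ iP] by auto
  show "k \<circ> P \<circ> inv P = k" for k by (rule comp_inv_cancel[OF assms])
  show "k \<circ> inv P \<circ> P = k" for k by (rule comp_inv_cancel[OF assms])
qed

lemma T_meas:
  assumes "P permutes {1..d}"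
  shows "(\<lambda>x. \<lambda>i\<in>{1..d}. x (P i)) \<in> measurable (cube d) (cube d)"
  unfolding cube_def
proof (rule measurable_restrict)
  fix i assume "i \<in> {1..d}"
  then have "P i \<in> {1..d}" using permutes_in_image[OF assms] by simp
  then show "(\<lambda>x. x (P i)) \<in> measurable (PiM {1..d} (\<lambda>_. restrict_space lborel {0..1})) (restrict_space lborel {0..1})"
    by (rule measurable_component_singleton)
qed

lemma cube_distr:
  assumes "P permutes {1..d}"
  shows "distr (cube d) (cube d) (\<lambda>x. \<lambda>i\<in>{1..d}. x (P i)) = cube d"
  unfolding cube_def
  using distr_PiM_reindex[of "{1..d}" "\<lambda>_. restrict_space lborel {0..1}" P "{1..d}"]
    prob_space_restrict_unit[of "{0..1}"] permutes_inj_on[OF assms] permutes_in_image[OF assms]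
  by auto

lemma fc_sym:
  assumes f: "f \<in> Sym_space R \<alpha> \<beta>0 \<beta>1 d I" and P: "P permutes I"
  shows "fourier_coeff d f (k \<circ> P) = fourier_coeff d f k"
proof -
  have PD: "P permutes {1..d}" using P I_sub permutes_subset by blast
  have fF: "f \<in> Fspace R \<alpha> \<beta>0 \<beta>1 d" using f by (simp add: Sym_space_def)
  then have fm: "f \<in> borel_measurable (cube d)" by (simp add: Fspace_def)
  define T where "T = (\<lambda>x::nat \<Rightarrow> real. \<lambda>i\<in>{1..d}. x (P i))"
  have hm: "(\<lambda>y. f y * cnj (ek d (k \<circ> P) y)) \<in> borel_measurable (cube d)"
    using fm ek_cnj_measurable[of d "k \<circ> P" "{0..1}"] by (simp add: cube_UM)
  have "fourier_coeff d f (k \<circ> P) = (LINT y|cube d. f y * cnj (ek d (k \<circ> P) y))"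
    by (simp only: fourier_coeff_def cnj_ek)
  also have "\<dots> = (LINT y|distr (cube d) (cube d) T. f y * cnj (ek d (k \<circ> P) y))"
    using cube_distr[OF PD] by (simp add: T_def)
  also have "\<dots> = (LINT x|cube d. f (T x) * cnj (ek d (k \<circ> P) (T x)))"
    by (rule integral_distr) (use T_meas[OF PD] hm in \<open>auto simp: T_def\<close>)
  also have "\<dots> = (LINT x|cube d. f x * cnj (ek d k x))"
  proof (rule Bochner_Integration.integral_cong[OF refl])
    fix x assume x: "x \<in> space (cube d)"
    have Tx: "T x = (\<lambda>i. x (P i))"
    proof
      fix i show "T x i = x (P i)"
      proof (cases "i \<in> {1..d}")
        case False
        then have "P i = i" using permutes_not_in[OF PD] by blast
        moreover have "x i = undefined" using x False by (auto simp: cube_UM space_UM PiE_def extensional_def)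
        ultimately show ?thesis using False by (simp add: T_def)
      qed (simp add: T_def)
    qed
    have "f x = f (\<lambda>i. x (P i))" using f x P by (auto simp: Sym_space_def)
    then show "f (T x) * cnj (ek d (k \<circ> P) (T x)) = f x * cnj (ek d k x)"
      by (simp add: Tx ek_perm[OF PD])
  qed
  also have "\<dots> = fourier_coeff d f k" by (simp only: fourier_coeff_def cnj_ek)
  finally show ?thesis .
qed

end

context setting2
begin

definition wv :: "(nat \<Rightarrow> real) \<Rightarrow> (nat \<Rightarrow> int) \<Rightarrow> complex" where
  "wv \<Delta> k = (1 / of_nat (card Sg)) * (\<Sum>P\<in>Sg. if k \<circ> P \<in> Adual then ek d (k \<circ> P) \<Delta> else 0)"

definition WW :: "(nat \<Rightarrow> real) \<Rightarrow> real" where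
  "WW \<Delta> = infsum (\<lambda>k. (cmod (wv \<Delta> k))^2 * rho k) (Zd d)"

lemma wv_bound: "cmod (wv \<Delta> k) \<le> 1"
proof -
  have "norm (\<Sum>P\<in>Sg. if k \<circ> P \<in> Adual then ek d (k \<circ> P) \<Delta> else 0) \<le> (\<Sum>P\<in>Sg. norm (if k \<circ> P \<in> Adual then ek d (k \<circ> P) \<Delta> else 0))"
    by (rule norm_sum)
  also have "\<dots> \<le> (\<Sum>P\<in>Sg. 1)" by (rule sum_mono) auto
  also have "\<dots> = real (card Sg)" by simp
  finally show ?thesis using Sg_card_pos by (simp add: wv_def norm_mult norm_divide divide_simps)
qed

lemma WW_summable: "(\<lambda>k. (cmod (wv \<Delta> k))^2 * rho k) summable_on Zd d"
proof (rule summable_on_comparison_test[OF rho_summable])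
  fix k
  have "(cmod (wv \<Delta> k))^2 \<le> 1" using wv_bound[of \<Delta> k] by (simp add: power_le_one)
  then show "(cmod (wv \<Delta> k))^2 * rho k \<le> rho k" using rho_pos[of k] by (simp add: mult_left_le_one_le)
  show "0 \<le> (cmod (wv \<Delta> k))^2 * rho k" using rho_pos[of k] by simp
qed

lemma WW_nonneg: "WW \<Delta> \<ge> 0"
  unfolding WW_def by (intro infsum_nonneg) (simp add: less_imp_le[OF rho_pos])

lemma bij_Sg: "Q \<in> Sg \<Longrightarrow> bij_betw (\<lambda>P. Q \<circ> P) Sg Sg"
proof (rule bij_betwI[where g="\<lambda>P. inv Q \<circ> P"])
  assume Q: "Q \<in> Sg"
  then have Qp: "Q permutes I" by (simp add: Sg_def)
  show "(\<lambda>P. Q \<circ> P) \<in> Sg \<rightarrow> Sg" using Qp by (auto simp: Sg_def intro: permutes_compose)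
  show "(\<lambda>P. inv Q \<circ> P) \<in> Sg \<rightarrow> Sg" using permutes_inv[OF Qp] by (auto simp: Sg_def intro: permutes_compose)
  show "inv Q \<circ> (Q \<circ> P) = P" for P using permutes_inv_o[OF Qp] by (simp add: o_assoc)
  show "Q \<circ> (inv Q \<circ> P) = P" for P using permutes_inv_o[OF Qp] by (simp add: o_assoc)
qed

lemma wv_perm:
  assumes Q: "Q \<in> Sg"
  shows "wv \<Delta> (k \<circ> Q) = wv \<Delta> k"
proof -
  have "(\<Sum>P\<in>Sg. if k \<circ> Q \<circ> P \<in> Adual then ek d (k \<circ> Q \<circ> P) \<Delta> else 0) =
        (\<Sum>P\<in>Sg. (\<lambda>P'. if k \<circ> P' \<in> Adual then ek d (k \<circ> P') \<Delta> else 0) (Q \<circ> P))"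
    by (simp only: o_assoc)
  also have "\<dots> = (\<Sum>P\<in>Sg. if k \<circ> P \<in> Adual then ek d (k \<circ> P) \<Delta> else 0)"
    by (rule sum.reindex_bij_betw[OF bij_Sg[OF Q]])
  finally show ?thesis by (simp add: wv_def)
qed

lemma T1:
  assumes f: "f \<in> Sym_space R \<alpha> \<beta>0 \<beta>1 d I"
  shows "infsum (\<lambda>k. fourier_coeff d f k * ek d k \<Delta>) Adual = infsum (\<lambda>k. fourier_coeff d f k * wv \<Delta> k) (Zd d)"
    "(\<lambda>k. fourier_coeff d f k * wv \<Delta> k) summable_on Zd d"
proof -
  define c where "c = fourier_coeff d f"
  have fF: "f \<in> Fspace R \<alpha> \<beta>0 \<beta>1 d" using f by (simp add: Sym_space_def)
  have cs: "(\<lambda>k. norm (c k)) summable_on Zd d" unfolding c_def by (rule coeff_abs_summable[OF fF])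
  define G where "G P k = c k * (if k \<circ> P \<in> Adual then ek d (k \<circ> P) \<Delta> else 0)" for P k
  have Gs: "G P summable_on Zd d" for P
    by (rule abs_summable_summable, rule summable_on_comparison_test[OF cs]) (auto simp: G_def norm_mult)
  have AZ: "Adual \<subseteq> Zd d" by (auto simp: Adual_def)
  have each: "infsum (G P) (Zd d) = infsum (\<lambda>k. c k * ek d k \<Delta>) Adual" if P: "P \<in> Sg" for P
  proof -
    have PI: "P permutes I" using P by (simp add: Sg_def)
    have PD: "P permutes {1..d}" using Sg_D[OF P] .
    have "infsum (G P) (Zd d) = infsum (\<lambda>k. (\<lambda>k'. c k' * (if k' \<in> Adual then ek d k' \<Delta> else 0)) (k \<circ> P)) (Zd d)"
      by (rule infsum_cong) (simp add: G_def c_def fc_sym[OF f PI])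
    also have "\<dots> = infsum (\<lambda>k'. c k' * (if k' \<in> Adual then ek d k' \<Delta> else 0)) (Zd d)"
      by (rule infsum_reindex_bij_betw[OF bij_comp[OF PD]])
    also have "\<dots> = infsum (\<lambda>k. c k * ek d k \<Delta>) Adual"
      by (rule infsum_cong_neutral) (use AZ in auto)
    finally show ?thesis .
  qed
  have eqf: "(\<lambda>k. c k * wv \<Delta> k) = (\<lambda>k. (1 / of_nat (card Sg)) * (\<Sum>P\<in>Sg. G P k))"
    by (auto simp: wv_def G_def sum_distrib_left mult_ac)
  have fs: "infsum (\<lambda>k. \<Sum>P\<in>Sg. G P k) (Zd d) = (\<Sum>P\<in>Sg. infsum (G P) (Zd d)) \<and>
      (\<lambda>k. \<Sum>P\<in>Sg. G P k) summable_on Zd d"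
    by (rule infsum_finsum) (use Sg_finite Gs in auto)
  show "(\<lambda>k. fourier_coeff d f k * wv \<Delta> k) summable_on Zd d"
    unfolding c_def[symmetric] eqf by (rule summable_on_cmult_right) (use fs in auto)
  have "infsum (\<lambda>k. c k * wv \<Delta> k) (Zd d) = (1 / of_nat (card Sg)) * infsum (\<lambda>k. \<Sum>P\<in>Sg. G P k) (Zd d)"
    unfolding eqf by (rule infsum_cmult_right) (use fs in auto)
  also have "\<dots> = (1 / of_nat (card Sg)) * (\<Sum>P\<in>Sg. infsum (\<lambda>k. c k * ek d k \<Delta>) Adual)"
    using fs each by simp
  also have "\<dots> = infsum (\<lambda>k. c k * ek d k \<Delta>) Adual" using Sg_card_pos by simp
  finally show "infsum (\<lambda>k. fourier_coeff d f k * ek d k \<Delta>) Adual = infsum (\<lambda>k. fourier_coeff d f k * wv \<Delta> k) (Zd d)"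
    by (simp add: c_def)
qed

lemma err_bound:
  assumes f: "f \<in> Sym_space R \<alpha> \<beta>0 \<beta>1 d I" and fn: "Fnorm R \<alpha> \<beta>0 \<beta>1 d f \<le> 1"
  shows "cmod (err f \<Delta>) \<le> sqrt (WW \<Delta>)"
proof -
  have fF: "f \<in> Fspace R \<alpha> \<beta>0 \<beta>1 d" using f by (simp add: Sym_space_def)
  have sq: "(\<lambda>k. (cmod (fourier_coeff d f k))^2 * rr k) summable_on Zd d" by (rule Fspace_sq_summable[OF fF])
  have le1: "infsum (\<lambda>k. (cmod (fourier_coeff d f k))^2 * rr k) (Zd d) \<le> 1"
    using fn by (simp add: Fnorm_def rr_def)
  have "cmod (err f \<Delta>) = norm (infsum (\<lambda>k. fourier_coeff d f k * ek d k \<Delta>) Adual)"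
    by (simp add: err_formula(1)[OF fF])
  also have "\<dots> = norm (infsum (\<lambda>k. fourier_coeff d f k * wv \<Delta> k) (Zd d))"
    by (simp add: T1(1)[OF f])
  also have "\<dots> \<le> sqrt (WW \<Delta>)"
    unfolding WW_def by (rule cs_bound(2)[OF sq le1 WW_summable])
  finally show ?thesis .
qed

end

context setting2
begin

lemma zero_fun_Sym: "(\<lambda>_. 0) \<in> Sym_space R \<alpha> \<beta>0 \<beta>1 d I" "Fnorm R \<alpha> \<beta>0 \<beta>1 d (\<lambda>_. 0) = 0"
proof -
  have e: "ser (\<lambda>_. 0) = (\<lambda>_. 0)" by (simp add: ser_def[abs_def])
  have s1: "(\<lambda>k. norm ((\<lambda>_. 0::complex) k)) summable_on Zd d" by simp
  have s2: "(\<lambda>k. (cmod ((\<lambda>_. 0::complex) k))^2 * rr k) summable_on Zd d" by simp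
  show "(\<lambda>_. 0) \<in> Sym_space R \<alpha> \<beta>0 \<beta>1 d I"
    using ser_in_Fspace(1)[OF s1 s2] by (simp add: e Sym_space_def)
  show "Fnorm R \<alpha> \<beta>0 \<beta>1 d (\<lambda>_. 0) = 0"
    using ser_in_Fspace(2)[OF s1 s2] by (simp add: e)
qed

lemma attain: "\<exists>g \<in> Sym_space R \<alpha> \<beta>0 \<beta>1 d I. Fnorm R \<alpha> \<beta>0 \<beta>1 d g \<le> 1 \<and> cmod (err g \<Delta>) = sqrt (WW \<Delta>)"
proof (cases "WW \<Delta> = 0")
  case True
  have "err (\<lambda>_. 0) \<Delta> = 0" by (simp add: err_def lattice_rule_def)
  then show ?thesis using zero_fun_Sym True by (intro bexI[of _ "\<lambda>_. 0"]) auto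
next
  case False
  define W where "W = WW \<Delta>"
  have W0: "W > 0" using False WW_nonneg[of \<Delta>] by (simp add: W_def)
  define s where "s = sqrt W"
  have s0: "s > 0" using W0 by (simp add: s_def)
  have s2: "s^2 = W" using W0 by (simp add: s_def)
  define a where "a k = cnj (wv \<Delta> k) * of_real (rho k / s)" for k
  have na: "norm (a k) = cmod (wv \<Delta> k) * rho k / s" for k
    using rho_pos[of k] s0 by (simp add: a_def norm_mult norm_divide)
  have as: "(\<lambda>k. norm (a k)) summable_on Zd d"
  proof (rule summable_on_comparison_test[OF summable_on_cdivide[OF rho_summable, of s]])
    fix k
    show "norm (a k) \<le> rho k / s" unfolding na
      using wv_bound[of \<Delta> k] rho_pos[of k] s0 by (simp add: divide_right_mono mult_left_le_one_le)
  qed auto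
  have sqeq: "(cmod (a k))^2 * rr k = (cmod (wv \<Delta> k))^2 * rho k / W" for k
  proof -
    have "rho k * rr k = 1" using rr_pos[of k] by (simp add: rho_eq)
    then have "(cmod (a k))^2 * rr k = (cmod (wv \<Delta> k))^2 * rho k * (rho k * rr k) / s^2"
      unfolding na by (simp add: power_mult_distrib power_divide power2_eq_square)
    then show ?thesis by (simp only: \<open>rho k * rr k = 1\<close> mult_1_right s2)
  qed
  have sq: "(\<lambda>k. (cmod (a k))^2 * rr k) summable_on Zd d"
    unfolding sqeq by (rule summable_on_cdivide[OF WW_summable])
  have sum1: "infsum (\<lambda>k. (cmod (a k))^2 * rr k) (Zd d) = 1"
    unfolding sqeq infsum_cdivide[OF WW_summable] using W0 by (simp add: W_def WW_def)
  define g where "g = ser a"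
  have gF: "g \<in> Fspace R \<alpha> \<beta>0 \<beta>1 d" unfolding g_def by (rule ser_in_Fspace(1)[OF as sq])
  have gN: "Fnorm R \<alpha> \<beta>0 \<beta>1 d g = 1" unfolding g_def ser_in_Fspace(2)[OF as sq] sum1 by simp
  have gsym: "g x = g (\<lambda>i. x (P i))" if P: "P permutes I" for x P
  proof -
    have iPS: "inv P \<in> Sg" using permutes_inv[OF P] by (simp add: Sg_def)
    have iPD: "inv P permutes {1..d}" using Sg_D[OF iPS] .
    have PD: "P permutes {1..d}" using P I_sub permutes_subset by blast
    have ainv: "a (k \<circ> inv P) = a k" for k
      by (simp add: a_def wv_perm[OF iPS] rho_perm[OF iPD])
    have ekinv: "ek d k (\<lambda>i. x (P i)) = ek d (k \<circ> inv P) x" for k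
      using ek_perm[OF PD, of "k \<circ> inv P" x] comp_inv_cancel(2)[OF P, of k] by simp
    have "g (\<lambda>i. x (P i)) = infsum (\<lambda>k. (\<lambda>k'. a k' * ek d k' x) (k \<circ> inv P)) (Zd d)"
      unfolding g_def ser_def by (rule infsum_cong) (simp add: ekinv ainv)
    also have "\<dots> = infsum (\<lambda>k'. a k' * ek d k' x) (Zd d)"
      by (rule infsum_reindex_bij_betw[OF bij_comp[OF iPD]])
    finally show ?thesis by (simp add: g_def ser_def)
  qed
  have gS: "g \<in> Sym_space R \<alpha> \<beta>0 \<beta>1 d I"
    unfolding Sym_space_def
  proof (intro CollectI conjI ballI allI impI)
    show "g \<in> Fspace R \<alpha> \<beta>0 \<beta>1 d" by (rule gF)
    fix x P assume "P permutes I"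
    then show "g x = g (\<lambda>i. x (P i))" by (rule gsym)
  qed
  have aw: "a k * wv \<Delta> k = of_real ((cmod (wv \<Delta> k))^2 * rho k / s)" for k
  proof -
    have e1: "a k * wv \<Delta> k = of_real (rho k / s) * (wv \<Delta> k * cnj (wv \<Delta> k))"
      by (simp add: a_def mult_ac)
    have e2: "wv \<Delta> k * cnj (wv \<Delta> k) = of_real ((cmod (wv \<Delta> k))^2)"
      by (simp only: complex_norm_square)
    have e3: "(cmod (wv \<Delta> k))^2 * rho k / s = rho k / s * (cmod (wv \<Delta> k))^2"
      by (simp add: divide_inverse mult_ac)
    have "a k * wv \<Delta> k = of_real (rho k / s) * of_real ((cmod (wv \<Delta> k))^2)"
      by (simp only: e1 e2)
    also have "\<dots> = of_real (rho k / s * (cmod (wv \<Delta> k))^2)"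
      by (simp only: of_real_mult)
    also have "\<dots> = of_real ((cmod (wv \<Delta> k))^2 * rho k / s)"
      by (simp only: e3)
    finally show ?thesis .
  qed
  have hs: "((\<lambda>k. (cmod (wv \<Delta> k))^2 * rho k / s) has_sum (W / s)) (Zd d)"
  proof -
    have "(\<lambda>k. (cmod (wv \<Delta> k))^2 * rho k / s) summable_on Zd d"
      by (rule summable_on_cdivide[OF WW_summable])
    moreover have "infsum (\<lambda>k. (cmod (wv \<Delta> k))^2 * rho k / s) (Zd d) = W / s"
      unfolding infsum_cdivide[OF WW_summable] by (simp add: W_def WW_def)
    ultimately show ?thesis by (simp add: has_sum_iff)
  qed
  have "err g \<Delta> = - infsum (\<lambda>k. fourier_coeff d g k * ek d k \<Delta>) Adual"
    by (rule err_formula(1)[OF gF])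
  also have "\<dots> = - infsum (\<lambda>k. fourier_coeff d g k * wv \<Delta> k) (Zd d)"
    by (simp add: T1(1)[OF gS])
  also have "\<dots> = - infsum (\<lambda>k. of_real ((cmod (wv \<Delta> k))^2 * rho k / s)) (Zd d)"
  proof -
    have "infsum (\<lambda>k. fourier_coeff d g k * wv \<Delta> k) (Zd d) = infsum (\<lambda>k. of_real ((cmod (wv \<Delta> k))^2 * rho k / s)) (Zd d)"
    proof (rule infsum_cong)
      fix k assume k: "k \<in> Zd d"
      have "fourier_coeff d g k = a k" unfolding g_def by (rule ser_coeff[OF as k])
      then show "fourier_coeff d g k * wv \<Delta> k = of_real ((cmod (wv \<Delta> k))^2 * rho k / s)"
        by (simp only: aw)
    qed
    then show ?thesis by simp
  qed
  also have "\<dots> = - of_real (W / s)"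
  proof -
    have hs2: "((\<lambda>k. complex_of_real ((cmod (wv \<Delta> k))^2 * rho k / s)) has_sum complex_of_real (W / s)) (Zd d)"
      by (rule has_sum_of_real[OF hs])
    then show ?thesis by (simp add: has_sum_iff)
  qed
  finally have eg: "err g \<Delta> = - of_real (W / s)" .
  have ws: "W / s = s" using s2 s0 by (simp add: power2_eq_square field_simps)
  have "cmod (err g \<Delta>) = s" unfolding eg ws using s0 by simp
  then have "cmod (err g \<Delta>) = sqrt (WW \<Delta>)" by (simp add: s_def W_def)
  then show ?thesis using gS gN by (intro bexI[of _ g] conjI) simp_all
qed

lemma wce_eq: "wce R \<alpha> \<beta>0 \<beta>1 d I n z \<Delta> = sqrt (WW \<Delta>)"
proof -
  have "wce R \<alpha> \<beta>0 \<beta>1 d I n z \<Delta> =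
        Sup ((\<lambda>f. cmod (err f \<Delta>)) ` {f \<in> Sym_space R \<alpha> \<beta>0 \<beta>1 d I. Fnorm R \<alpha> \<beta>0 \<beta>1 d f \<le> 1})"
    by (simp add: wce_def err_def)
  also have "\<dots> = sqrt (WW \<Delta>)"
  proof (rule cSup_eq_maximum)
    show "sqrt (WW \<Delta>) \<in> (\<lambda>f. cmod (err f \<Delta>)) ` {f \<in> Sym_space R \<alpha> \<beta>0 \<beta>1 d I. Fnorm R \<alpha> \<beta>0 \<beta>1 d f \<le> 1}"
    proof -
      from attain[of \<Delta>] obtain g where g1: "g \<in> Sym_space R \<alpha> \<beta>0 \<beta>1 d I"
        and g2: "Fnorm R \<alpha> \<beta>0 \<beta>1 d g \<le> 1 \<and> cmod (err g \<Delta>) = sqrt (WW \<Delta>)"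
        by (rule bexE)
      have g3: "sqrt (WW \<Delta>) = cmod (err g \<Delta>)" using g2 by (rule conjunct2[THEN sym])
      have g4: "g \<in> {f \<in> Sym_space R \<alpha> \<beta>0 \<beta>1 d I. Fnorm R \<alpha> \<beta>0 \<beta>1 d f \<le> 1}"
        by (simp add: g1 conjunct1[OF g2])
      show ?thesis by (rule image_eqI[where f="\<lambda>f. cmod (err f \<Delta>)", OF g3 g4])
    qed
    show "x \<le> sqrt (WW \<Delta>)" if "x \<in> (\<lambda>f. cmod (err f \<Delta>)) ` {f \<in> Sym_space R \<alpha> \<beta>0 \<beta>1 d I. Fnorm R \<alpha> \<beta>0 \<beta>1 d f \<le> 1}" for x
      using that err_bound by blast
  qed
  finally show ?thesis .
qed

end

context setting2
begin

definition eP :: "(nat \<Rightarrow> int) \<Rightarrow> (nat \<Rightarrow> nat) \<Rightarrow> (nat \<Rightarrow> real) \<Rightarrow> complex" where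
  "eP k P \<Delta> = (if k \<circ> P \<in> Adual then ek d (k \<circ> P) \<Delta> else 0)"

definition cc :: "(nat \<Rightarrow> int) \<Rightarrow> real" where
  "cc k = (1 / real (card Sg))^2 * (\<Sum>P\<in>Sg. \<Sum>Q\<in>Sg. if k \<circ> P \<in> Adual \<and> k \<circ> Q = k \<circ> P then 1 else 0)"

lemma eP_meas[measurable]: "eP k P \<in> borel_measurable (UM S d)"
  unfolding eP_def by (cases "k \<circ> P \<in> Adual") auto

lemma eP_cnj_meas[measurable]: "(\<lambda>\<Delta>. cnj (eP k P \<Delta>)) \<in> borel_measurable (UM S d)"
  unfolding eP_def by (cases "k \<circ> P \<in> Adual") auto

lemma wv_eP: "wv \<Delta> k = (1 / of_nat (card Sg)) * (\<Sum>P\<in>Sg. eP k P \<Delta>)"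
  by (simp add: wv_def eP_def)

lemma wv_meas: "(\<lambda>\<Delta>. wv \<Delta> k) \<in> borel_measurable (UM S d)"
  unfolding wv_eP by measurable

lemma norm_eP: "norm (eP k P \<Delta>) \<le> 1" by (simp add: eP_def)

lemma eP_orth:
  assumes S: "S = {0..1} \<or> S = {0..<1}" and k: "k \<in> Zd d" and P: "P \<in> Sg" and Q: "Q \<in> Sg"
  shows "(LINT \<Delta>|UM S d. eP k P \<Delta> * cnj (eP k Q \<Delta>)) =
         (if k \<circ> P \<in> Adual \<and> k \<circ> Q = k \<circ> P then 1 else 0)"
proof -
  have kP: "k \<circ> P \<in> Zd d" by (rule comp_Zd[OF k Sg_D[OF P]])
  have kQ: "k \<circ> Q \<in> Zd d" by (rule comp_Zd[OF k Sg_D[OF Q]])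
  show ?thesis
  proof (cases "k \<circ> P \<in> Adual \<and> k \<circ> Q \<in> Adual")
    case True
    then show ?thesis using ek_orth[OF S kP kQ] by (auto simp: eP_def)
  next
    case False
    have z: "(\<lambda>\<Delta>. eP k P \<Delta> * cnj (eP k Q \<Delta>)) = (\<lambda>_. 0)"
      by (rule ext) (use False in \<open>auto simp: eP_def\<close>)
    have r: "\<not> (k \<circ> P \<in> Adual \<and> k \<circ> Q = k \<circ> P)" using False by auto
    show ?thesis unfolding z using r by simp
  qed
qed

lemma int_sq_wv:
  assumes S: "S = {0..1} \<or> S = {0..<1}" and k: "k \<in> Zd d"
  shows "(LINT \<Delta>|UM S d. (cmod (wv \<Delta> k))^2) = cc k"
proof -
  interpret prob_space "UM S d" by (rule UM_prob[OF S])
  define c where "c = 1 / real (card Sg)"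
  have iP: "integrable (UM S d) (\<lambda>\<Delta>. eP k P \<Delta> * cnj (eP k Q \<Delta>))" for P Q
    by (rule integrable_const_bound[where B=1])
       (auto simp: norm_mult intro!: mult_le_one norm_eP borel_measurable_times)
  have e1: "complex_of_real ((cmod (wv \<Delta> k))^2) =
     of_real (c^2) * (\<Sum>P\<in>Sg. \<Sum>Q\<in>Sg. eP k P \<Delta> * cnj (eP k Q \<Delta>))" for \<Delta>
  proof -
    have "complex_of_real ((cmod (wv \<Delta> k))^2) = wv \<Delta> k * cnj (wv \<Delta> k)"
      by (rule complex_norm_square)
    also have "\<dots> = (of_real c * (\<Sum>P\<in>Sg. eP k P \<Delta>)) * (of_real c * (\<Sum>Q\<in>Sg. cnj (eP k Q \<Delta>)))"
      by (simp add: wv_eP c_def cnj_sum)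
    also have "\<dots> = of_real (c^2) * ((\<Sum>P\<in>Sg. eP k P \<Delta>) * (\<Sum>Q\<in>Sg. cnj (eP k Q \<Delta>)))"
      by (simp add: power2_eq_square mult_ac)
    also have "\<dots> = of_real (c^2) * (\<Sum>P\<in>Sg. \<Sum>Q\<in>Sg. eP k P \<Delta> * cnj (eP k Q \<Delta>))"
      by (simp add: sum_product)
    finally show ?thesis .
  qed
  have "complex_of_real (LINT \<Delta>|UM S d. (cmod (wv \<Delta> k))^2) =
        (LINT \<Delta>|UM S d. complex_of_real ((cmod (wv \<Delta> k))^2))"
    by (rule integral_complex_of_real[symmetric])
  also have "\<dots> = (LINT \<Delta>|UM S d. of_real (c^2) * (\<Sum>P\<in>Sg. \<Sum>Q\<in>Sg. eP k P \<Delta> * cnj (eP k Q \<Delta>)))"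
    by (simp only: e1)
  also have "\<dots> = of_real (c^2) * (\<Sum>P\<in>Sg. \<Sum>Q\<in>Sg. LINT \<Delta>|UM S d. eP k P \<Delta> * cnj (eP k Q \<Delta>))"
    using iP by (simp add: integral_sum integrable_sum)
  also have "\<dots> = of_real (c^2) * (\<Sum>P\<in>Sg. \<Sum>Q\<in>Sg. (if k \<circ> P \<in> Adual \<and> k \<circ> Q = k \<circ> P then 1 else 0))"
    using eP_orth[OF S k] by (simp cong: sum.cong)
  also have "\<dots> = complex_of_real (cc k)"
  proof -
    have of_if: "complex_of_real (if b then 1 else 0) = (if b then 1 else 0)" for b by simp
    show ?thesis unfolding cc_def c_def of_real_mult of_real_sum of_if by simp
  qed
  finally show ?thesis by (simp only: of_real_eq_iff)
qed

lemma rms_formula: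
  "(rms_wce R \<alpha> \<beta>0 \<beta>1 d I n z)^2 = infsum (\<lambda>k. cc k * rho k) (Zd d)"
proof -
  define S :: "real set" where "S = {0..<1}"
  have S: "S = {0..1} \<or> S = {0..<1}" by (simp add: S_def)
  interpret prob_space "UM S d" by (rule UM_prob[OF S])
  have wce2: "(wce R \<alpha> \<beta>0 \<beta>1 d I n z \<Delta>)^2 = WW \<Delta>" for \<Delta>
    using WW_nonneg[of \<Delta>] by (simp add: wce_eq)
  have bnd: "norm ((cmod (wv \<Delta> k))^2 * rho k) \<le> rho k" for \<Delta> k
  proof -
    have "(cmod (wv \<Delta> k))^2 \<le> 1" using wv_bound[of \<Delta> k] by (simp add: power_le_one)
    then show ?thesis using rho_pos[of k] by (simp add: mult_left_le_one_le)
  qed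
  have meas: "(\<lambda>\<Delta>. (cmod (wv \<Delta> k))^2 * rho k) \<in> borel_measurable (UM S d)" for k
    using wv_meas[of k S] by measurable
  have "(LINT \<Delta>|shift_cube d. (wce R \<alpha> \<beta>0 \<beta>1 d I n z \<Delta>)^2) = (LINT \<Delta>|UM S d. WW \<Delta>)"
    by (simp add: wce2 shift_UM S_def)
  also have "\<dots> = (LINT \<Delta>|UM S d. infsum (\<lambda>k. (cmod (wv \<Delta> k))^2 * rho k) (Zd d))"
    by (simp add: WW_def)
  also have "\<dots> = infsum (\<lambda>k. LINT \<Delta>|UM S d. (cmod (wv \<Delta> k))^2 * rho k) (Zd d)"
    by (rule infsum_integral(2)[where b=rho])
       (use countable_Zd finite_measure_axioms meas bnd rho_summable rho_pos in \<open>auto intro: less_imp_le\<close>)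
  also have "\<dots> = infsum (\<lambda>k. cc k * rho k) (Zd d)"
    by (rule infsum_cong) (simp add: int_sq_wv[OF S])
  finally have "(LINT \<Delta>|shift_cube d. (wce R \<alpha> \<beta>0 \<beta>1 d I n z \<Delta>)^2) = infsum (\<lambda>k. cc k * rho k) (Zd d)" .
  moreover have "(LINT \<Delta>|shift_cube d. (wce R \<alpha> \<beta>0 \<beta>1 d I n z \<Delta>)^2) \<ge> 0"
    by (rule integral_nonneg_AE) simp
  ultimately show ?thesis by (simp add: rms_wce_def)
qed

end

context setting2
begin

definition Mc :: "(nat \<Rightarrow> int) \<Rightarrow> nat" where
  "Mc k = card {Q \<in> Sg. k \<circ> Q = k}"

lemma card_shift:
  assumes P: "P \<in> Sg"
  shows "card {Q \<in> Sg. k \<circ> Q = k \<circ> P} = Mc k"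
proof -
  have Pp: "P permutes I" using P by (simp add: Sg_def)
  have "bij_betw (\<lambda>Q. Q \<circ> P) {Q \<in> Sg. k \<circ> Q = k} {Q \<in> Sg. k \<circ> Q = k \<circ> P}"
  proof (rule bij_betwI[where g="\<lambda>Q. Q \<circ> inv P"])
    show "(\<lambda>Q. Q \<circ> P) \<in> {Q \<in> Sg. k \<circ> Q = k} \<rightarrow> {Q \<in> Sg. k \<circ> Q = k \<circ> P}"
      using Pp by (auto simp: Sg_def o_assoc intro: permutes_compose)
    show "(\<lambda>Q. Q \<circ> inv P) \<in> {Q \<in> Sg. k \<circ> Q = k \<circ> P} \<rightarrow> {Q \<in> Sg. k \<circ> Q = k}"
    proof
      fix Q assume Q: "Q \<in> {Q \<in> Sg. k \<circ> Q = k \<circ> P}"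
      have "k \<circ> (Q \<circ> inv P) = k \<circ> P \<circ> inv P" using Q by (simp add: o_assoc)
      also have "\<dots> = k" by (rule comp_inv_cancel(1)[OF Pp])
      finally show "Q \<circ> inv P \<in> {Q \<in> Sg. k \<circ> Q = k}"
        using Q permutes_inv[OF Pp] by (auto simp: Sg_def intro: permutes_compose)
    qed
    show "Q \<circ> P \<circ> inv P = Q" for Q by (rule comp_inv_cancel(1)[OF Pp])
    show "Q \<circ> inv P \<circ> P = Q" for Q by (rule comp_inv_cancel(2)[OF Pp])
  qed
  then show ?thesis by (simp add: Mc_def bij_betw_same_card)
qed

lemma Mc_perm:
  assumes P: "P \<in> Sg"
  shows "Mc (k \<circ> P) = Mc k"
proof -
  have Pp: "P permutes I" using P by (simp add: Sg_def)
  have iPp: "inv P permutes I" by (rule permutes_inv[OF Pp])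
  have "bij_betw (\<lambda>Q. P \<circ> Q \<circ> inv P) {Q \<in> Sg. k \<circ> P \<circ> Q = k \<circ> P} {Q \<in> Sg. k \<circ> Q = k}"
  proof (rule bij_betwI[where g="\<lambda>Q. inv P \<circ> Q \<circ> P"])
    show "(\<lambda>Q. P \<circ> Q \<circ> inv P) \<in> {Q \<in> Sg. k \<circ> P \<circ> Q = k \<circ> P} \<rightarrow> {Q \<in> Sg. k \<circ> Q = k}"
    proof
      fix Q assume Q: "Q \<in> {Q \<in> Sg. k \<circ> P \<circ> Q = k \<circ> P}"
      have "k \<circ> (P \<circ> Q \<circ> inv P) = (k \<circ> P \<circ> Q) \<circ> inv P" by (simp add: o_assoc)
      also have "\<dots> = k \<circ> P \<circ> inv P" using Q by simp
      also have "\<dots> = k" by (rule comp_inv_cancel(1)[OF Pp])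
      finally show "P \<circ> Q \<circ> inv P \<in> {Q \<in> Sg. k \<circ> Q = k}"
        using Q Pp iPp by (auto simp: Sg_def intro!: permutes_compose)
    qed
    show "(\<lambda>Q. inv P \<circ> Q \<circ> P) \<in> {Q \<in> Sg. k \<circ> Q = k} \<rightarrow> {Q \<in> Sg. k \<circ> P \<circ> Q = k \<circ> P}"
    proof
      fix Q assume Q: "Q \<in> {Q \<in> Sg. k \<circ> Q = k}"
      have "k \<circ> P \<circ> (inv P \<circ> Q \<circ> P) = (k \<circ> P \<circ> inv P) \<circ> Q \<circ> P" by (simp add: o_assoc)
      also have "\<dots> = k \<circ> Q \<circ> P" by (simp add: comp_inv_cancel(1)[OF Pp])
      also have "\<dots> = k \<circ> P" using Q by simp
      finally show "inv P \<circ> Q \<circ> P \<in> {Q \<in> Sg. k \<circ> P \<circ> Q = k \<circ> P}"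
        using Q Pp iPp by (auto simp: Sg_def intro!: permutes_compose)
    qed
    show "inv P \<circ> (P \<circ> Q \<circ> inv P) \<circ> P = Q" for Q
      by (simp add: fun_eq_iff permutes_inverses[OF Pp])
    show "P \<circ> (inv P \<circ> Q \<circ> P) \<circ> inv P = Q" for Q
      by (simp add: fun_eq_iff permutes_inverses[OF Pp])
  qed
  then show ?thesis by (simp add: Mc_def bij_betw_same_card)
qed

lemma Mc_le: "Mc k \<le> card Sg"
  unfolding Mc_def by (rule card_mono[OF Sg_finite]) auto

lemma cc_eq: "cc k = (1 / real (card Sg))^2 * (\<Sum>P\<in>Sg. if k \<circ> P \<in> Adual then real (Mc k) else 0)"
proof -
  have "(\<Sum>Q\<in>Sg. if k \<circ> P \<in> Adual \<and> k \<circ> Q = k \<circ> P then 1 else 0) =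
        (if k \<circ> P \<in> Adual then real (Mc k) else 0)" if P: "P \<in> Sg" for P
  proof (cases "k \<circ> P \<in> Adual")
    case True
    have "(\<Sum>Q\<in>Sg. if k \<circ> P \<in> Adual \<and> k \<circ> Q = k \<circ> P then 1 else (0::real)) =
          (\<Sum>Q\<in>Sg. if k \<circ> Q = k \<circ> P then 1 else 0)" using True by simp
    also have "\<dots> = (\<Sum>Q\<in>{Q \<in> Sg. k \<circ> Q = k \<circ> P}. 1)"
      by (rule sum.inter_filter[symmetric, OF Sg_finite])
    also have "\<dots> = real (Mc k)" using card_shift[OF P] by simp
    finally show ?thesis using True by simp
  qed simp
  then show ?thesis unfolding cc_def by (simp cong: sum.cong)
qed

lemma cc_sum:
  "infsum (\<lambda>k. cc k * rho k) (Zd d) = (1 / real (card Sg)) * infsum (\<lambda>k. real (Mc k) * rho k) Adual"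
proof -
  define c where "c = (1 / real (card Sg))"
  define G where "G P k = (if k \<circ> P \<in> Adual then real (Mc k) * rho k else 0)" for P k
  have AZ: "Adual \<subseteq> Zd d" by (auto simp: Adual_def)
  have Gs: "G P summable_on Zd d" for P
  proof (rule summable_on_comparison_test[OF summable_on_cmult_right[OF rho_summable, of "real (card Sg)"]])
    fix k
    have "real (Mc k) * rho k \<le> real (card Sg) * rho k"
      using Mc_le[of k] rho_pos[of k] by (intro mult_right_mono) auto
    then show "G P k \<le> real (card Sg) * rho k" "0 \<le> G P k"
      using rho_pos[of k] by (auto simp: G_def)
  qed
  have eq: "cc k * rho k = c^2 * (\<Sum>P\<in>Sg. G P k)" for k
    by (simp add: cc_eq c_def G_def sum_distrib_left sum_distrib_right if_distrib mult_ac cong: if_cong)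
  have each: "infsum (G P) (Zd d) = infsum (\<lambda>k. real (Mc k) * rho k) Adual" if P: "P \<in> Sg" for P
  proof -
    have PD: "P permutes {1..d}" by (rule Sg_D[OF P])
    have "infsum (G P) (Zd d) = infsum (\<lambda>k. (\<lambda>k'. if k' \<in> Adual then real (Mc k') * rho k' else 0) (k \<circ> P)) (Zd d)"
      by (rule infsum_cong) (simp add: G_def Mc_perm[OF P] rho_perm[OF PD])
    also have "\<dots> = infsum (\<lambda>k'. if k' \<in> Adual then real (Mc k') * rho k' else 0) (Zd d)"
      by (rule infsum_reindex_bij_betw[OF bij_comp[OF PD]])
    also have "\<dots> = infsum (\<lambda>k. real (Mc k) * rho k) Adual"
      by (rule infsum_cong_neutral) (use AZ in auto)
    finally show ?thesis .
  qed
  have fs: "infsum (\<lambda>k. \<Sum>P\<in>Sg. G P k) (Zd d) = (\<Sum>P\<in>Sg. infsum (G P) (Zd d))"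
    using infsum_finsum[OF Sg_finite, of G "Zd d"] Gs by auto
  have "infsum (\<lambda>k. cc k * rho k) (Zd d) = c^2 * infsum (\<lambda>k. \<Sum>P\<in>Sg. G P k) (Zd d)"
    unfolding eq by (rule infsum_cmult_right')
  also have "\<dots> = c^2 * (real (card Sg) * infsum (\<lambda>k. real (Mc k) * rho k) Adual)"
    unfolding fs using each by simp
  also have "\<dots> = c * infsum (\<lambda>k. real (Mc k) * rho k) Adual"
    using Sg_card_pos by (simp add: c_def power2_eq_square)
  finally show ?thesis by (simp add: c_def)
qed

end

lemma permutes_restrict_inv:
  assumes fin: "finite T" and Q: "Q permutes S" and TS: "T \<subseteq> S" and inv: "\<And>x. x \<in> T \<Longrightarrow> Q x \<in> T"
  shows "(\<lambda>x. if x \<in> T then Q x else x) permutes T"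
proof (rule bij_imp_permutes)
  have injQ: "inj_on Q T" using permutes_inj_on[OF Q] .
  have im: "Q ` T = T" by (rule endo_inj_surj[OF fin _ injQ]) (use inv in auto)
  have "bij_betw Q T T" using injQ im by (simp add: bij_betw_def)
  then show "bij_betw (\<lambda>x. if x \<in> T then Q x else x) T T"
    by (rule bij_betw_cong[THEN iffD1, rotated]) auto
qed auto

lemma stab_card:
  fixes k :: "nat \<Rightarrow> int" and u I :: "nat set"
  assumes finI: "finite I" and finu: "finite u"
    and ku: "\<And>j. j \<in> u \<Longrightarrow> k j \<noteq> 0" and k0: "\<And>j. j \<notin> u \<Longrightarrow> k j = 0"
  shows "card {Q. Q permutes I \<and> k \<circ> Q = k} =
         card {P. P permutes (u \<inter> I) \<and> (\<forall>j\<in>u. k (P j) = k j)} * fact (card I - card (I \<inter> u))"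
proof -
  define St1 where "St1 = {P. P permutes (u \<inter> I) \<and> (\<forall>j\<in>u. k (P j) = k j)}"
  define Pm2 where "Pm2 = {P. P permutes (I - u)}"
  define Stab where "Stab = {Q. Q permutes I \<and> k \<circ> Q = k}"
  define m :: "(nat \<Rightarrow> nat) \<times> (nat \<Rightarrow> nat) \<Rightarrow> nat \<Rightarrow> nat" where "m = (\<lambda>(P1, P2). P1 \<circ> P2)"
  have fin1: "finite St1" unfolding St1_def
    by (rule finite_subset[OF _ finite_permutations[of "u \<inter> I"]]) (use finu in auto)
  have fin2: "finite Pm2" unfolding Pm2_def by (rule finite_permutations) (use finI in auto)
  have bij: "bij_betw m (St1 \<times> Pm2) Stab"
  proof (rule bij_betw_imageI)
    show "inj_on m (St1 \<times> Pm2)"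
    proof (rule inj_onI)
      fix x y assume x: "x \<in> St1 \<times> Pm2" and y: "y \<in> St1 \<times> Pm2" and e: "m x = m y"
      obtain P1 P2 where xx: "x = (P1, P2)" by (cases x)
      obtain P1' P2' where yy: "y = (P1', P2')" by (cases y)
      have p1: "P1 permutes (u \<inter> I)" "P1' permutes (u \<inter> I)" using x y xx yy by (auto simp: St1_def)
      have p2: "P2 permutes (I - u)" "P2' permutes (I - u)" using x y xx yy by (auto simp: Pm2_def)
      have e': "P1 (P2 j) = P1' (P2' j)" for j using e xx yy by (auto simp: m_def fun_eq_iff)
      have "P1 j = P1' j" for j
      proof (cases "j \<in> u \<inter> I")
        case True
        then have "P2 j = j" "P2' j = j" using p2 permutes_not_in by (metis Diff_iff IntD1)+
        then show ?thesis using e'[of j] by simp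
      next
        case False
        then show ?thesis using p1 permutes_not_in by metis
      qed
      then have P1e: "P1 = P1'" by auto
      have "P2 j = P2' j" for j
        using e'[of j] permutes_inj[OF p1(1)] unfolding P1e[symmetric] by (auto dest: injD)
      then have "P2 = P2'" by auto
      then show "x = y" using xx yy P1e by simp
    qed
    show "m ` (St1 \<times> Pm2) = Stab"
    proof
      show "m ` (St1 \<times> Pm2) \<subseteq> Stab"
      proof
        fix q assume "q \<in> m ` (St1 \<times> Pm2)"
        then obtain P1 P2 where P1: "P1 \<in> St1" and P2: "P2 \<in> Pm2" and q: "q = P1 \<circ> P2"
          by (auto simp: m_def)
        have p1: "P1 permutes (u \<inter> I)" and p1k: "\<And>j. j \<in> u \<Longrightarrow> k (P1 j) = k j" using P1 by (auto simp: St1_def)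
        have p2: "P2 permutes (I - u)" using P2 by (auto simp: Pm2_def)
        have "q permutes I" unfolding q
          by (rule permutes_compose[OF permutes_subset[OF p2] permutes_subset[OF p1]]) auto
        moreover have "k (q j) = k j" for j
        proof (cases "j \<in> I - u")
          case True
          then have "P2 j \<in> I - u" using permutes_in_image[OF p2] by simp
          then have "P1 (P2 j) = P2 j" using permutes_not_in[OF p1] by auto
          then show ?thesis using \<open>P2 j \<in> I - u\<close> True k0 by (simp add: q)
        next
          case False
          then have "P2 j = j" using permutes_not_in[OF p2] by blast
          then show ?thesis
          proof (cases "j \<in> u")
            case True
            then show ?thesis using \<open>P2 j = j\<close> p1k by (simp add: q)
          next
            case False
            then have "P1 j = j" using permutes_not_in[OF p1] by blast
            then show ?thesis using \<open>P2 j = j\<close> by (simp add: q)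
          qed
        qed
        ultimately show "q \<in> Stab" by (auto simp: Stab_def fun_eq_iff)
      qed
      show "Stab \<subseteq> m ` (St1 \<times> Pm2)"
      proof
        fix Q assume "Q \<in> Stab"
        then have Qp: "Q permutes I" and Qk: "\<And>j. k (Q j) = k j" by (auto simp: Stab_def fun_eq_iff)
        define P1 where "P1 = (\<lambda>x. if x \<in> u \<inter> I then Q x else x)"
        define P2 where "P2 = (\<lambda>x. if x \<in> I - u then Q x else x)"
        have inv1: "Q x \<in> u \<inter> I" if "x \<in> u \<inter> I" for x
        proof -
          have "k (Q x) \<noteq> 0" using that ku Qk by auto
          then have "Q x \<in> u" using k0 by blast
          moreover have "Q x \<in> I" using that permutes_in_image[OF Qp] by auto
          ultimately show ?thesis by simp
        qed
        have inv2: "Q x \<in> I - u" if "x \<in> I - u" for x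
        proof -
          have "k (Q x) = 0" using that k0 Qk by auto
          then have "Q x \<notin> u" using ku by blast
          moreover have "Q x \<in> I" using that permutes_in_image[OF Qp] by auto
          ultimately show ?thesis by simp
        qed
        have p1: "P1 permutes (u \<inter> I)" unfolding P1_def
          by (rule permutes_restrict_inv[OF _ Qp _ inv1]) (use finu in auto)
        have p2: "P2 permutes (I - u)" unfolding P2_def
          by (rule permutes_restrict_inv[OF _ Qp _ inv2]) (use finI in auto)
        have P1S: "P1 \<in> St1" using p1 Qk by (auto simp: St1_def P1_def)
        have P2S: "P2 \<in> Pm2" using p2 by (simp add: Pm2_def)
        have "P1 \<circ> P2 = Q"
        proof
          fix j show "(P1 \<circ> P2) j = Q j"
          proof (cases "j \<in> I - u")
            case True
            then show ?thesis using inv2[OF True] by (auto simp: P1_def P2_def)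
          next
            case False
            show ?thesis
            proof (cases "j \<in> u \<inter> I")
              case True
              then show ?thesis using False by (auto simp: P1_def P2_def)
            next
              case False2: False
              then have "j \<notin> I" using False by auto
              then have "Q j = j" using permutes_not_in[OF Qp] by blast
              then show ?thesis using False False2 by (auto simp: P1_def P2_def)
            qed
          qed
        qed
        then show "Q \<in> m ` (St1 \<times> Pm2)" using P1S P2S
          by (intro image_eqI[of _ _ "(P1, P2)"]) (auto simp: m_def)
      qed
    qed
  qed
  have "card Stab = card (St1 \<times> Pm2)" using bij_betw_same_card[OF bij] by simp
  also have "\<dots> = card St1 * card Pm2" by (rule card_cartesian_product)
  also have "card Pm2 = fact (card I - card (I \<inter> u))"
  proof -
    have "card Pm2 = fact (card (I - u))" unfolding Pm2_def by (rule card_permutations) (use finI in auto)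
    also have "card (I - u) = card I - card (I \<inter> u)" by (rule card_Diff_subset_Int) (use finI in auto)
    finally show ?thesis .
  qed
  finally show ?thesis by (simp add: Stab_def St1_def)
qed

lemma alg_identity:
  fixes X A B C r p q :: real
  assumes "A > 0" "B > 0" "C > 0" "r > 0" "p > 0" "q > 0"
  shows "X * B * p / r / (A * B * C) = (p * q) * (inverse (q * C) * (X / A * inverse r))"
  using assms by (simp add: field_simps)

context setting2
begin

definition Au :: "nat set \<Rightarrow> (nat \<Rightarrow> int) set" where
  "Au u = {k. k \<in> nonzero_vecs u \<and> in_dual n z u k}"

definition UU :: "nat set set" where "UU = {u. u \<subseteq> {1..d} \<and> u \<noteq> {}}"

lemma UU_finite: "finite UU"
  unfolding UU_def by (rule finite_subset[of _ "Pow {1..d}"]) auto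

lemma in_dual_D:
  assumes "u \<subseteq> {1..d}" "k \<in> nonzero_vecs u"
  shows "in_dual n z {1..d} k = in_dual n z u k"
proof -
  have "(\<Sum>j\<in>{1..d}. k j * z j) = (\<Sum>j\<in>u. k j * z j)"
    by (rule sum.mono_neutral_right) (use assms in \<open>auto simp: nonzero_vecs_def\<close>)
  then show ?thesis by (simp add: in_dual_def)
qed

lemma Adual_Union: "Adual = (\<Union>u\<in>UU. Au u)"
proof
  show "Adual \<subseteq> (\<Union>u\<in>UU. Au u)"
  proof
    fix k assume k: "k \<in> Adual"
    define u where "u = {j. k j \<noteq> 0}"
    have kZ: "k \<in> Zd d" and kn: "k \<noteq> (\<lambda>_. 0)" and kd: "in_dual n z {1..d} k"
      using k by (auto simp: Adual_def)
    have uD: "u \<subseteq> {1..d}" using kZ by (auto simp: u_def Zd_def)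
    have une: "u \<noteq> {}" using kn by (auto simp: u_def fun_eq_iff)
    have kv: "k \<in> nonzero_vecs u" by (auto simp: u_def nonzero_vecs_def)
    have "k \<in> Au u" using kd in_dual_D[OF uD kv] kv by (simp add: Au_def)
    then show "k \<in> (\<Union>u\<in>UU. Au u)" using uD une by (auto simp: UU_def)
  qed
  show "(\<Union>u\<in>UU. Au u) \<subseteq> Adual"
  proof
    fix k assume "k \<in> (\<Union>u\<in>UU. Au u)"
    then obtain u where u: "u \<in> UU" and k: "k \<in> Au u" by blast
    have uD: "u \<subseteq> {1..d}" and une: "u \<noteq> {}" using u by (auto simp: UU_def)
    have kv: "k \<in> nonzero_vecs u" and kd: "in_dual n z u k" using k by (auto simp: Au_def)
    have "k \<in> Zd d" using kv uD by (auto simp: Zd_def nonzero_vecs_def)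
    moreover have "k \<noteq> (\<lambda>_. 0)" using kv une by (auto simp: nonzero_vecs_def fun_eq_iff)
    moreover have "in_dual n z {1..d} k" using kd in_dual_D[OF uD kv] by simp
    ultimately show "k \<in> Adual" by (simp add: Adual_def)
  qed
qed

lemma Au_disj: "u \<noteq> u' \<Longrightarrow> Au u \<inter> Au u' = {}"
  by (auto simp: Au_def nonzero_vecs_def)

lemma Au_sub: "u \<in> UU \<Longrightarrow> Au u \<subseteq> Adual"
  using Adual_Union by blast

lemma f_summable_A: "(\<lambda>k. real (Mc k) * rho k) summable_on Adual"
proof -
  have "(\<lambda>k. real (Mc k) * rho k) summable_on Zd d"
  proof (rule summable_on_comparison_test[OF summable_on_cmult_right[OF rho_summable, of "real (card Sg)"]])
    fix k
    show "real (Mc k) * rho k \<le> real (card Sg) * rho k"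
      using Mc_le[of k] rho_pos[of k] by (intro mult_right_mono) auto
    show "0 \<le> real (Mc k) * rho k" using rho_pos[of k] by simp
  qed
  then show ?thesis by (rule summable_on_subset_banach) (auto simp: Adual_def)
qed

lemma rho_u:
  assumes uD: "u \<subseteq> {1..d}" and kv: "k \<in> nonzero_vecs u"
  shows "rho k = \<beta>0 ^ (d - card u) * inverse (r_ab R \<alpha> \<beta>0 \<beta>1 u k)"
proof -
  have fu: "finite u" using uD finite_subset by blast
  have "rho k = (\<Prod>j\<in>{1..d} - u. phi (k j)) * (\<Prod>j\<in>u. phi (k j))"
    unfolding rho_def by (rule prod.subset_diff[OF uD]) simp
  also have "(\<Prod>j\<in>{1..d} - u. phi (k j)) = \<beta>0 ^ (d - card u)"
  proof -
    have "(\<Prod>j\<in>{1..d} - u. phi (k j)) = (\<Prod>j\<in>{1..d} - u. \<beta>0)"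
      by (rule prod.cong) (use kv in \<open>auto simp: nonzero_vecs_def phi_def\<close>)
    also have "\<dots> = \<beta>0 ^ card ({1..d} - u)" by simp
    also have "card ({1..d} - u) = d - card u" using uD fu by (simp add: card_Diff_subset)
    finally show ?thesis .
  qed
  also have "(\<Prod>j\<in>u. phi (k j)) = inverse (r_ab R \<alpha> \<beta>0 \<beta>1 u k)"
  proof -
    have "inverse (r_ab R \<alpha> \<beta>0 \<beta>1 u k) = 1 / r_ab R \<alpha> \<beta>0 \<beta>1 u k" by (simp add: field_simps)
    also have "\<dots> = (\<Prod>j\<in>u. 1 / (if k j = 0 then 1 / \<beta>0 else R (real_of_int \<bar>k j\<bar>) powr (2 * \<alpha>) / \<beta>1))"
      unfolding r_ab_def by (simp add: prod_dividef)
    also have "\<dots> = (\<Prod>j\<in>u. phi (k j))" by (simp add: inv_term)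
    finally show ?thesis by simp
  qed
  finally show ?thesis by simp
qed

lemma term_eq:
  assumes u: "u \<in> UU" and k: "k \<in> Au u"
  shows "real (Mc k) * rho k / real (card Sg) =
     \<beta>0 ^ d * (inverse (c_uI \<beta>0 u I) *
       (real (Mfact u I k) / real (card (Sperm u I)) * inverse (r_ab R \<alpha> \<beta>0 \<beta>1 u k)))"
proof -
  have uD: "u \<subseteq> {1..d}" using u by (auto simp: UU_def)
  have fu: "finite u" using uD finite_subset by blast
  have kv: "k \<in> nonzero_vecs u" using k by (simp add: Au_def)
  define m where "m = card I"
  define a where "a = card (I \<inter> u)"
  have am: "a \<le> m" unfolding a_def m_def by (rule card_mono[OF finite_I]) auto
  have cu: "card u \<le> d" using card_mono[OF _ uD] by simp
  have Mc_eq: "Mc k = Mfact u I k * fact (m - a)"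
  proof -
    have "Mc k = card {Q. Q permutes I \<and> k \<circ> Q = k}" by (simp add: Mc_def Sg_def)
    also have "\<dots> = card {P. P permutes (u \<inter> I) \<and> (\<forall>j\<in>u. k (P j) = k j)} * fact (card I - card (I \<inter> u))"
      by (rule stab_card[OF finite_I fu]) (use kv in \<open>auto simp: nonzero_vecs_def\<close>)
    also have "{P. P permutes (u \<inter> I) \<and> (\<forall>j\<in>u. k (P j) = k j)} = {P \<in> Sperm u I. \<forall>j\<in>u. k (P j) = k j}"
      by (simp add: Sperm_def)
    finally show ?thesis by (simp add: Mfact_def m_def a_def)
  qed
  have cS: "card Sg = fact m" unfolding Sg_def m_def by (rule card_permutations) (use finite_I in auto)
  have cSp: "card (Sperm u I) = fact a"
  proof -
    have "card (Sperm u I) = fact (card (u \<inter> I))" unfolding Sperm_def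
      by (rule card_permutations) (use fu in auto)
    then show ?thesis by (simp add: a_def Int_commute)
  qed
  have fm: "real (fact m) = real (fact a) * real (fact (m - a)) * real (m choose a)"
    using binomial_fact_lemma[OF am] by (metis of_nat_mult)
  have b0: "\<beta>0 ^ d = \<beta>0 ^ (d - card u) * \<beta>0 ^ card u"
    using cu by (simp add: power_add[symmetric])
  have cpos: "real (m choose a) > 0" using am by simp
  have rpos: "r_ab R \<alpha> \<beta>0 \<beta>1 u k > 0" by (rule rab_pos)
  have "real (Mc k) * rho k / real (card Sg) =
        real (Mfact u I k) * real (fact (m - a)) * \<beta>0 ^ (d - card u) / r_ab R \<alpha> \<beta>0 \<beta>1 u k /
          (real (fact a) * real (fact (m - a)) * real (m choose a))"
    unfolding Mc_eq cS rho_u[OF uD kv] fm by (simp add: field_simps)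
  also have "\<dots> = (\<beta>0 ^ (d - card u) * \<beta>0 ^ card u) *
      (inverse (\<beta>0 ^ card u * real (m choose a)) * (real (Mfact u I k) / real (fact a) * inverse (r_ab R \<alpha> \<beta>0 \<beta>1 u k)))"
    by (rule alg_identity) (use cpos rpos beta0 in auto)
  finally show ?thesis
    unfolding b0[symmetric] by (simp add: c_uI_def cSp m_def a_def)
qed

definition Bin :: "nat set \<Rightarrow> real" where
  "Bin u = inverse (c_uI \<beta>0 u I) *
        (\<Sum>\<^sub>\<infinity>h\<in>nonzero_vecs u.
           real (Mfact u I h) / real (card (Sperm u I)) *
           inverse (r_ab R \<alpha> \<beta>0 \<beta>1 u h) *
           (if in_dual n z u h then 1 else 0))"

lemma block_eq:
  assumes u: "u \<in> UU"
  shows "infsum (\<lambda>k. real (Mc k) * rho k / real (card Sg)) (Au u) = \<beta>0 ^ d * Bin u"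
proof -
  define g where "g h = real (Mfact u I h) / real (card (Sperm u I)) * inverse (r_ab R \<alpha> \<beta>0 \<beta>1 u h) *
           (if in_dual n z u h then 1 else 0)" for h
  have "infsum (\<lambda>k. real (Mc k) * rho k / real (card Sg)) (Au u) =
        infsum (\<lambda>k. (\<beta>0 ^ d * inverse (c_uI \<beta>0 u I)) * g k) (Au u)"
    by (rule infsum_cong) (simp add: term_eq[OF u] g_def Au_def mult_ac)
  also have "\<dots> = (\<beta>0 ^ d * inverse (c_uI \<beta>0 u I)) * infsum g (Au u)"
    by (rule infsum_cmult_right')
  also have "infsum g (Au u) = infsum g (nonzero_vecs u)"
    by (rule infsum_cong_neutral) (auto simp: g_def Au_def)
  also have "Bin u = inverse (c_uI \<beta>0 u I) * infsum g (nonzero_vecs u)"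
    unfolding Bin_def g_def[abs_def] by (rule refl)
  ultimately show ?thesis by (simp only: mult.assoc)
qed

lemma group_Max:
  "(\<Sum>u\<in>UU. Bin u) = (\<Sum>l=1..d. \<Sum>u\<in>{u. u \<subseteq> {1..l} \<and> l \<in> u}. Bin u)"
proof -
  have img: "Max ` UU \<subseteq> {1..d}"
  proof
    fix l assume "l \<in> Max ` UU"
    then obtain u where u: "u \<in> UU" and l: "l = Max u" by blast
    have uD: "u \<subseteq> {1..d}" and une: "u \<noteq> {}" using u by (auto simp: UU_def)
    have "finite u" using uD finite_subset by blast
    then have "Max u \<in> u" using une by (rule Max_in)
    then show "l \<in> {1..d}" using uD l by auto
  qed
  have sets: "{u. u \<in> UU \<and> Max u = l} = {u. u \<subseteq> {1..l} \<and> l \<in> u}" if l: "l \<in> {1..d}" for l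
  proof
    show "{u. u \<in> UU \<and> Max u = l} \<subseteq> {u. u \<subseteq> {1..l} \<and> l \<in> u}"
    proof
      fix u assume "u \<in> {u. u \<in> UU \<and> Max u = l}"
      then have uD: "u \<subseteq> {1..d}" and une: "u \<noteq> {}" and ml: "Max u = l" by (auto simp: UU_def)
      have fu: "finite u" using uD finite_subset by blast
      have "l \<in> u" using Max_in[OF fu une] ml by simp
      moreover have "u \<subseteq> {1..l}"
      proof
        fix j assume j: "j \<in> u"
        have "j \<le> Max u" by (rule Max_ge[OF fu j])
        then show "j \<in> {1..l}" using j uD ml by auto
      qed
      ultimately show "u \<in> {u. u \<subseteq> {1..l} \<and> l \<in> u}" by simp
    qed
    show "{u. u \<subseteq> {1..l} \<and> l \<in> u} \<subseteq> {u. u \<in> UU \<and> Max u = l}"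
    proof
      fix u assume "u \<in> {u. u \<subseteq> {1..l} \<and> l \<in> u}"
      then have ul: "u \<subseteq> {1..l}" and lu: "l \<in> u" by auto
      have fu: "finite u" using ul finite_subset by blast
      have "u \<subseteq> {1..d}" using ul l by auto
      moreover have "u \<noteq> {}" using lu by auto
      moreover have "Max u = l" by (rule Max_eqI[OF fu]) (use ul lu in auto)
      ultimately show "u \<in> {u. u \<in> UU \<and> Max u = l}" by (simp add: UU_def)
    qed
  qed
  have "(\<Sum>u\<in>UU. Bin u) = (\<Sum>l\<in>{1..d}. \<Sum>u\<in>{u. u \<in> UU \<and> Max u = l}. Bin u)"
    by (rule sum.group[OF UU_finite _ img, symmetric]) simp
  also have "\<dots> = (\<Sum>l=1..d. \<Sum>u\<in>{u. u \<subseteq> {1..l} \<and> l \<in> u}. Bin u)"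
    by (rule sum.cong) (simp_all add: sets)
  finally show ?thesis .
qed

lemma final_sum:
  "(1 / real (card Sg)) * infsum (\<lambda>k. real (Mc k) * rho k) Adual =
     \<beta>0 ^ d * (\<Sum>l=1..d. B_term R \<alpha> \<beta>0 \<beta>1 I n l z)"
proof -
  define f where "f = (\<lambda>k. real (Mc k) * rho k / real (card Sg))"
  have fs: "f summable_on Adual"
    unfolding f_def by (rule summable_on_cdivide[OF f_summable_A])
  have "(1 / real (card Sg)) * infsum (\<lambda>k. real (Mc k) * rho k) Adual = infsum f Adual"
    unfolding f_def by (simp add: infsum_cdivide[OF f_summable_A])
  also have "\<dots> = (\<Sum>u\<in>UU. infsum f (Au u))"
    unfolding Adual_Union
    by (rule sum_infsum[symmetric, OF UU_finite])
       (use fs Au_sub Adual_Union Au_disj in \<open>auto intro: summable_on_subset_banach\<close>)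
  also have "\<dots> = (\<Sum>u\<in>UU. \<beta>0 ^ d * Bin u)"
    by (rule sum.cong) (simp_all add: f_def block_eq)
  also have "\<dots> = \<beta>0 ^ d * (\<Sum>l=1..d. \<Sum>u\<in>{u. u \<subseteq> {1..l} \<and> l \<in> u}. Bin u)"
    by (simp add: sum_distrib_left[symmetric] group_Max)
  also have "\<dots> = \<beta>0 ^ d * (\<Sum>l=1..d. B_term R \<alpha> \<beta>0 \<beta>1 I n l z)"
    by (simp add: B_term_def Bin_def)
  finally show ?thesis .
qed

end

theorem proposition4p4:
  fixes R :: "real \<Rightarrow> real" and \<alpha> \<beta>0 \<beta>1 c_R :: real
    and d n :: nat and I :: "nat set" and z :: "nat \<Rightarrow> int"
  assumes R_pos: "\<forall>x::real. x \<ge> 1 \<longrightarrow> R x > 0"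
    and cR: "c_R \<ge> 1"
    and R_scale: "\<forall>k m :: nat. k \<ge> 1 \<longrightarrow> m \<ge> 1 \<longrightarrow>
                    R (real m) / c_R \<le> R (real (k * m)) / real k \<and>
                    R (real (k * m)) / real k \<le> R (real m)"
    and alpha: "\<alpha> \<ge> 0"
    and muR: "summable (\<lambda>m::nat. R (real (Suc m)) powr (- 2 * \<alpha>))"
    and beta0: "\<beta>0 > 0" and beta1: "\<beta>1 > 0"
    and d: "d \<ge> 1"
    and I: "I \<subseteq> {1..d}"
    and n: "prime n"
    and z: "\<forall>j\<in>{1..d}. z j \<in> {0..<int n}"
  shows "(rms_wce R \<alpha> \<beta>0 \<beta>1 d I n z)^2 =
           \<beta>0 ^ d * (\<Sum>l=1..d. B_term R \<alpha> \<beta>0 \<beta>1 I n l z)"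
proof -
  interpret setting2 R \<alpha> \<beta>0 \<beta>1 d n z I
  proof (unfold_locales)
    show "\<And>x. 1 \<le> x \<Longrightarrow> 0 < R x" using R_pos by blast
    show "summable (\<lambda>m::nat. R (real (Suc m)) powr (- 2 * \<alpha>))" by (rule muR)
    show "0 < \<beta>0" by (rule beta0)
    show "0 < \<beta>1" by (rule beta1)
    show "1 \<le> d" by (rule d)
    show "0 < n" using n by (rule prime_gt_0_nat)
    show "I \<subseteq> {1..d}" by (rule I)
  qed
  have "(rms_wce R \<alpha> \<beta>0 \<beta>1 d I n z)^2 = infsum (\<lambda>k. cc k * rho k) (Zd d)"
    by (rule rms_formula)
  also have "\<dots> = (1 / real (card Sg)) * infsum (\<lambda>k. real (Mc k) * rho k) Adual"
    by (rule cc_sum)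
  also have "\<dots> = \<beta>0 ^ d * (\<Sum>l=1..d. B_term R \<alpha> \<beta>0 \<beta>1 I n l z)"
    by (rule final_sum)
  finally show ?thesis .
qed

end
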